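(* Fix $\tau$ in the upper half plane. The meromorphic function $$\mathfrak{Z}(x,y,z)=\wp(x-y)\bigl[\zeta(x-y)+\zeta(y-z)+\zeta(z-x)\bigr]+\tfrac12\wp'(x-y)$$ on $\mathbb{C}^3$ is cyclically symmetric: $\mathfrak{Z}(x,y,z)=\mathfrak{Z}(y,z,x)$.
   Context: $q=e^{2\pi i\tau}$. $\wp(z)=\wp(z,q)=z^{-2}+\sum_{k\ge0}(2k+1)G_{2k+2}z^{2k}$ and $\zeta(z)=\zeta(z,q)=z^{-1}-\sum_{k\ge0}G_{2k+2}z^{2k+1}$, where for even $k\ge2$, $G_k=(2\pi i)^k\bigl(-\frac{B_k}{k!}+\frac{2}{(k-1)!}\sum_{n\ge1}n^{k-1}\frac{q^n}{1-q^n}\bigr)$ ($B_k$ Bernoulli numbers, $t/(e^t-1)=\sum B_nt^n/n!$). Thus $\wp$ is the Weierstrass $\wp$-function of the lattice $\mathbb{Z}+\mathbb{Z}\tau$ plus the constant $G_2$, $\zeta$ is the corresponding quasi-elliptic function with $\wp=-\zeta'$, and $\wp'=\partial_z\wp$. *)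

theory Defs
  imports "HOL-Analysis.Analysis"
begin

definition latt :: "complex \<Rightarrow> int \<times> int \<Rightarrow> complex" where
  "latt \<tau> p = of_int (fst p) + of_int (snd p) * \<tau>"

definition wpW :: "complex \<Rightarrow> complex \<Rightarrow> complex" where
  "wpW \<tau> z = 1 / z^2 +
     (\<Sum>\<^sub>\<infinity>p\<in>UNIV - {(0,0)}. 1 / (z - latt \<tau> p)^2 - 1 / (latt \<tau> p)^2)"

definition zetaW :: "complex \<Rightarrow> complex \<Rightarrow> complex" where
  "zetaW \<tau> z = 1 / z +
     (\<Sum>\<^sub>\<infinity>p\<in>UNIV - {(0,0)}. 1 / (z - latt \<tau> p) + 1 / latt \<tau> p + z / (latt \<tau> p)^2)"

text \<open>G_2 = (2 pi i)^2 (-B_2/2! + 2 sum_{n>=1} n q^n/(1-q^n)), q = exp(2 pi i tau), B_2 = 1/6.\<close>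
definition G2 :: "complex \<Rightarrow> complex" where
  "G2 \<tau> = (let q = exp (2 * of_real pi * \<i> * \<tau>) in
     (2 * of_real pi * \<i>)^2 * (- (1/6) / 2 +
        2 * (\<Sum>n. of_nat (Suc n) * q ^ Suc n / (1 - q ^ Suc n))))"

text \<open>The paper's normalisations: wp = wpW + G_2, zeta = zetaW - G_2 z.\<close>
definition wp :: "complex \<Rightarrow> complex \<Rightarrow> complex" where
  "wp \<tau> z = wpW \<tau> z + G2 \<tau>"

definition zeta :: "complex \<Rightarrow> complex \<Rightarrow> complex" where
  "zeta \<tau> z = zetaW \<tau> z - G2 \<tau> * z"

definition wp' :: "complex \<Rightarrow> complex \<Rightarrow> complex" where
  "wp' \<tau> z = deriv (wp \<tau>) z"

definition frakZ :: "complex \<Rightarrow> complex \<Rightarrow> complex \<Rightarrow> complex \<Rightarrow> complex" where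
  "frakZ \<tau> x y z = wp \<tau> (x - y) * (zeta \<tau> (x - y) + zeta \<tau> (y - z) + zeta \<tau> (z - x))
                    + wp' \<tau> (x - y) / 2"

end

theory Submission
  imports Defs "HOL-Complex_Analysis.Complex_Analysis"
begin


lemma latt_Re: "Re (latt \<tau> p) = of_int (fst p) + of_int (snd p) * Re \<tau>"
  by (simp add: latt_def)
lemma latt_Im: "Im (latt \<tau> p) = of_int (snd p) * Im \<tau>"
  by (simp add: latt_def)

lemma latt_lower:
  assumes "Im \<tau> > 0"
  obtains c where "c > 0" "\<And>p. c * (\<bar>real_of_int (fst p)\<bar> + \<bar>real_of_int (snd p)\<bar>) \<le> norm (latt \<tau> p)"
proof -
  define c where "c = Im \<tau> / (Im \<tau> + norm \<tau> + 1)"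
  have cpos: "c > 0" using assms by (simp add: c_def add_pos_nonneg)
  have "c * (\<bar>real_of_int (fst p)\<bar> + \<bar>real_of_int (snd p)\<bar>) \<le> norm (latt \<tau> p)" for p
  proof -
    obtain m n where p: "p = (m,n)" by (cases p)
    let ?w = "latt \<tau> p"
    have n1: "\<bar>real_of_int n\<bar> * Im \<tau> \<le> norm ?w"
      using abs_Im_le_cmod[of ?w] assms by (simp add: latt_Im p abs_mult)
    have "\<bar>real_of_int m\<bar> = \<bar>Re ?w - of_int n * Re \<tau>\<bar>" by (simp add: latt_Re p)
    also have "\<dots> \<le> \<bar>Re ?w\<bar> + \<bar>real_of_int n\<bar> * \<bar>Re \<tau>\<bar>" by (metis abs_mult abs_triangle_ineq4)
    also have "\<dots> \<le> norm ?w + \<bar>real_of_int n\<bar> * norm \<tau>"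
      by (intro add_mono mult_left_mono abs_Re_le_cmod) auto
    finally have m1: "\<bar>real_of_int m\<bar> \<le> norm ?w + \<bar>real_of_int n\<bar> * norm \<tau>" .
    have "\<bar>real_of_int n\<bar> \<le> norm ?w / Im \<tau>" using n1 assms by (simp add: field_simps)
    then have "\<bar>real_of_int m\<bar> + \<bar>real_of_int n\<bar> \<le> norm ?w + (norm \<tau> + 1) * (norm ?w / Im \<tau>)"
    proof -
      have "\<bar>real_of_int n\<bar> * (norm \<tau> + 1) \<le> (norm ?w / Im \<tau>) * (norm \<tau> + 1)"
        by (rule mult_right_mono) (use \<open>\<bar>real_of_int n\<bar> \<le> _\<close> in auto)
      then show ?thesis using m1 by (simp add: algebra_simps)
    qed
    also have "\<dots> = norm ?w / c" using assms by (simp add: c_def field_simps)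
    finally show ?thesis using cpos p by (simp add: field_simps)
  qed
  with cpos show ?thesis using that by blast
qed

lemma latt_finite:
  assumes "Im \<tau> > 0"
  shows "finite {p. norm (latt \<tau> p) \<le> T}"
proof -
  obtain c where c: "c > 0" "\<And>p. c * (\<bar>real_of_int (fst p)\<bar> + \<bar>real_of_int (snd p)\<bar>) \<le> norm (latt \<tau> p)"
    using latt_lower[OF assms] by blast
  define N where "N = \<lceil>T / c\<rceil>"
  have "{p. norm (latt \<tau> p) \<le> T} \<subseteq> {-N..N} \<times> {-N..N}"
  proof
    fix p assume "p \<in> {p. norm (latt \<tau> p) \<le> T}"
    then have "c * (\<bar>real_of_int (fst p)\<bar> + \<bar>real_of_int (snd p)\<bar>) \<le> T" using c(2)[of p] by simp
    then have h: "\<bar>real_of_int (fst p)\<bar> + \<bar>real_of_int (snd p)\<bar> \<le> T / c" using c(1) by (simp add: field_simps)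
    have "T / c \<le> of_int N" unfolding N_def by (rule le_of_int_ceiling)
    then have "\<bar>real_of_int (fst p)\<bar> \<le> of_int N" "\<bar>real_of_int (snd p)\<bar> \<le> of_int N" using h by linarith+
    then have "\<bar>fst p\<bar> \<le> N" "\<bar>snd p\<bar> \<le> N" by linarith+
    then show "p \<in> {-N..N} \<times> {-N..N}" by (cases p) auto
  qed
  then show ?thesis by (rule finite_subset) auto
qed

lemma latt_nonzero_lower:
  assumes "Im \<tau> > 0"
  obtains \<delta> where "\<delta> > 0" "\<And>p. p \<noteq> (0,0) \<Longrightarrow> \<delta> \<le> norm (latt \<tau> p)"
proof -
  obtain c where c: "c > 0" "\<And>p. c * (\<bar>real_of_int (fst p)\<bar> + \<bar>real_of_int (snd p)\<bar>) \<le> norm (latt \<tau> p)"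
    using latt_lower[OF assms] by blast
  have "c \<le> norm (latt \<tau> p)" if "p \<noteq> (0,0)" for p
  proof -
    have "1 \<le> \<bar>real_of_int (fst p)\<bar> + \<bar>real_of_int (snd p)\<bar>" using that by (cases p) auto
    then have "c * 1 \<le> c * (\<bar>real_of_int (fst p)\<bar> + \<bar>real_of_int (snd p)\<bar>)" using c(1) by (intro mult_left_mono) auto
    then show ?thesis using c(2)[of p] by simp
  qed
  then show ?thesis using that c(1) by blast
qed

lemma latt_add: "latt \<tau> (fst p + fst q, snd p + snd q) = latt \<tau> p + latt \<tau> q"
  by (simp add: latt_def algebra_simps)
lemma latt_diff: "latt \<tau> (fst p - fst q, snd p - snd q) = latt \<tau> p - latt \<tau> q"
  by (simp add: latt_def algebra_simps)
lemma latt_neg: "latt \<tau> (- fst p, - snd p) = - latt \<tau> p"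
  by (simp add: latt_def algebra_simps)
lemma latt_zero[simp]: "latt \<tau> (0,0) = 0"
  by (simp add: latt_def)
lemma latt_one: "latt \<tau> (1,0) = 1"
  by (simp add: latt_def)
lemma latt_tau: "latt \<tau> (0,1) = \<tau>"
  by (simp add: latt_def)

lemma latt_closed:
  assumes "Im \<tau> > 0"
  shows "closed (range (latt \<tau>))"
proof -
  obtain \<delta> where d: "\<delta> > 0" "\<And>p. p \<noteq> (0,0) \<Longrightarrow> \<delta> \<le> norm (latt \<tau> p)"
    using latt_nonzero_lower[OF assms] by blast
  show ?thesis
  proof (rule discrete_imp_closed[OF d(1)], safe)
    fix p q assume "dist (latt \<tau> q) (latt \<tau> p) < \<delta>"
    then have "norm (latt \<tau> q - latt \<tau> p) < \<delta>" by (simp add: dist_norm)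
    then have "norm (latt \<tau> (fst q - fst p, snd q - snd p)) < \<delta>" by (simp only: latt_diff)
    then have "(fst q - fst p, snd q - snd p) = (0,0)"
      using d(2)[of "(fst q - fst p, snd q - snd p)"] by linarith
    then show "latt \<tau> q = latt \<tau> p" by (cases p, cases q) auto
  qed
qed

definition phi :: "int \<Rightarrow> real" where "phi k = (1 + \<bar>real_of_int k\<bar>) powr (-3/2)"

lemma phi_nonneg: "phi k \<ge> 0" by (simp add: phi_def)

lemma phi_summable: "phi summable_on UNIV"
proof -
  have s: "summable (\<lambda>n::nat. real n powr (-3/2))" by (simp add: summable_real_powr_iff)
  have "summable (\<lambda>n::nat. real (Suc n) powr (-3/2))"
    using s summable_Suc_iff[of "\<lambda>n::nat. real n powr (-3/2)"] by simp
  then have "(\<lambda>n::nat. real (Suc n) powr (-3/2)) summable_on UNIV"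
    by (rule summable_nonneg_imp_summable_on) simp
  moreover have "(phi \<circ> int) = (\<lambda>n::nat. real (Suc n) powr (-3/2))"
    "(phi \<circ> (\<lambda>n. - int n)) = (\<lambda>n::nat. real (Suc n) powr (-3/2))"
    by (auto simp: phi_def add.commute)
  ultimately have "phi summable_on range int" "phi summable_on range (\<lambda>n. - int n)"
    by (simp_all add: summable_on_reindex inj_on_def)
  then have "phi summable_on (range int \<union> range (\<lambda>n. - int n))" by (rule summable_on_union)
  moreover have "range int \<union> range (\<lambda>n. - int n) = UNIV"
  proof -
    have "k \<in> range int \<union> range (\<lambda>n. - int n)" for k :: int
    proof (cases "k \<ge> 0")
      case True then show ?thesis by (metis UnI1 nonneg_int_cases rangeI)
    next
      case False then have "k = - int (nat (-k))" by simp
      then show ?thesis by blast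
    qed
    then show ?thesis by blast
  qed
  ultimately show ?thesis by simp
qed

lemma phi_prod_summable: "(\<lambda>p. phi (fst p) * phi (snd p)) summable_on UNIV"
proof -
  have "(\<lambda>p. phi (fst p) * phi (snd p)) summable_on Sigma UNIV (\<lambda>_. UNIV)"
  proof (rule summable_on_SigmaI)
    show "((\<lambda>y. phi (fst (x, y)) * phi (snd (x, y))) has_sum (phi x * infsum phi UNIV)) UNIV" for x
      using phi_summable by (simp add: has_sum_cmult_right)
    show "(\<lambda>x. phi x * infsum phi UNIV) summable_on UNIV"
      using phi_summable by (rule summable_on_cmult_left)
  qed (auto simp: phi_nonneg)
  then show ?thesis by simp
qed

lemma phi_prod_lower:
  fixes m n :: int
  shows "1 / (1 + \<bar>real_of_int m\<bar> + \<bar>real_of_int n\<bar>) ^ 3 \<le> phi m * phi n"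
proof -
  define a where "a = 1 + \<bar>real_of_int m\<bar>"
  define b where "b = 1 + \<bar>real_of_int n\<bar>"
  have a: "a \<ge> 1" and b: "b \<ge> 1" by (auto simp: a_def b_def)
  have "phi m * phi n = (a * b) powr (-3/2)"
    using a b by (simp add: phi_def a_def b_def powr_mult)
  also have "(a * b) powr (-3/2) \<ge> ((a + b - 1) ^ 2) powr (-3/2)"
  proof (rule powr_mono2')
    show "0 < a * b" using a b by simp
    have "(a + b - 1) ^ 2 - a * b = (a - 1) * (b - 1) + (a - 1)^2 + (b-1)^2 + (a - 1) + (b - 1)"
      by (simp add: power2_eq_square algebra_simps)
    also have "\<dots> \<ge> 0"
    proof -
      have "(a - 1) * (b - 1) \<ge> 0" using a b by simp
      moreover have "(a - 1)^2 \<ge> 0" "(b - 1)^2 \<ge> 0" by simp_all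
      ultimately show ?thesis using a b by linarith
    qed
    finally show "a * b \<le> (a + b - 1) ^ 2" by simp
  qed simp
  also have "((a + b - 1) ^ 2) powr (-3/2) = 1 / (a + b - 1) ^ 3"
  proof -
    define x where "x = a + b - 1"
    have x: "x > 0" using a b by (simp add: x_def)
    have "(x ^ 2) powr (-3/2) = (x powr 2) powr (-3/2)" using x by (simp add: powr_numeral)
    also have "\<dots> = x powr (- 3)" by (simp add: powr_powr)
    also have "\<dots> = inverse (x powr 3)" by (simp add: powr_minus)
    also have "\<dots> = 1 / x ^ 3" using x by (simp add: powr_numeral divide_inverse)
    finally show ?thesis by (simp add: x_def)
  qed
  also have "a + b - 1 = 1 + \<bar>real_of_int m\<bar> + \<bar>real_of_int n\<bar>" by (simp add: a_def b_def)
  finally show ?thesis by simp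
qed

lemma latt_summable:
  assumes "Im \<tau> > 0"
  shows "(\<lambda>p. 1 / norm (latt \<tau> p) ^ 3) summable_on (UNIV - {(0,0)})"
proof -
  obtain c where c: "c > 0" "\<And>p. c * (\<bar>real_of_int (fst p)\<bar> + \<bar>real_of_int (snd p)\<bar>) \<le> norm (latt \<tau> p)"
    using latt_lower[OF assms] by blast
  define K where "K = (2 / c) ^ 3"
  have "(\<lambda>p. K * (phi (fst p) * phi (snd p))) summable_on (UNIV - {(0,0)})"
    by (rule summable_on_subset[OF summable_on_cmult_right[OF phi_prod_summable]]) auto
  then show ?thesis
  proof (rule summable_on_comparison_test)
    fix p :: "int \<times> int" assume p: "p \<in> UNIV - {(0,0)}"
    define s where "s = \<bar>real_of_int (fst p)\<bar> + \<bar>real_of_int (snd p)\<bar>"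
    have s1: "s \<ge> 1" using p by (cases p) (auto simp: s_def)
    have "1 + s \<le> (2 / c) * norm (latt \<tau> p)"
    proof -
      have "1 + s \<le> 2 * s" using s1 by simp
      also have "\<dots> \<le> 2 * (norm (latt \<tau> p) / c)" using c(2)[of p] c(1) by (simp add: s_def field_simps)
      finally show ?thesis by simp
    qed
    then have "(1 + s) ^ 3 \<le> ((2 / c) * norm (latt \<tau> p)) ^ 3" using s1 by (intro power_mono) auto
    then have "(1 + s) ^ 3 \<le> K * norm (latt \<tau> p) ^ 3" by (simp only: K_def power_mult_distrib)
    moreover have "(1 + s) ^ 3 > 0" using s1 by simp
    ultimately have pos: "K * norm (latt \<tau> p) ^ 3 > 0" by linarith
    have "1 / (K * norm (latt \<tau> p) ^ 3) \<le> 1 / (1 + s) ^ 3"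
      using s1 pos \<open>(1 + s) ^ 3 \<le> K * norm (latt \<tau> p) ^ 3\<close>
      by (intro divide_left_mono) auto
    also have "\<dots> \<le> phi (fst p) * phi (snd p)" using phi_prod_lower[of "fst p" "snd p"] by (simp add: s_def add.assoc)
    finally have "1 / (K * norm (latt \<tau> p) ^ 3) \<le> phi (fst p) * phi (snd p)" .
    moreover have "K > 0" using c(1) by (simp add: K_def)
    ultimately have "K * (1 / (K * norm (latt \<tau> p) ^ 3)) \<le> K * (phi (fst p) * phi (snd p))"
      by (intro mult_left_mono) auto
    then show "1 / norm (latt \<tau> p) ^ 3 \<le> K * (phi (fst p) * phi (snd p))"
      using \<open>K > 0\<close> by simp
  qed simp
qed



lemma infsum_split_finite:
  fixes f :: "'i \<Rightarrow> 'a::banach"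
  assumes "f summable_on I" "finite X" "X \<subseteq> I"
  shows "infsum f I = sum f X + infsum f (I - X)"
proof -
  have "infsum f (X \<union> (I - X)) = infsum f X + infsum f (I - X)"
    by (rule infsum_Un_disjoint) (use assms summable_on_subset_banach[OF assms(1) Diff_subset] in auto)
  moreover have "X \<union> (I - X) = I" using assms by auto
  ultimately show ?thesis using assms by simp
qed

lemma infsum_uniform_limit:
  fixes g :: "'i \<Rightarrow> complex \<Rightarrow> complex"
  assumes M: "M summable_on I"
    and bound: "\<And>p w. p \<in> I \<Longrightarrow> w \<in> S \<Longrightarrow> norm (g p w) \<le> M p"
  shows "uniform_limit S (\<lambda>X v. sum (\<lambda>p. g p v) X) (\<lambda>v. \<Sum>\<^sub>\<infinity>p\<in>I. g p v) (finite_subsets_at_top I)"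
proof -
  have Mnn: "M p \<ge> 0" if "p \<in> I" "w \<in> S" for p w using bound[OF that] norm_ge_zero order_trans by blast
  have sg: "(\<lambda>p. g p v) summable_on J" "(\<lambda>p. norm (g p v)) summable_on J" if "v \<in> S" "J \<subseteq> I" for v J
  proof -
    have "(\<lambda>p. norm (g p v)) summable_on I"
      by (rule summable_on_comparison_test[OF M]) (use bound that in auto)
    then show "(\<lambda>p. norm (g p v)) summable_on J"
      using that summable_on_subset by blast
    then show "(\<lambda>p. g p v) summable_on J"
      by (rule abs_summable_summable)
  qed
  show ?thesis unfolding uniform_limit_iff
  proof (intro allI impI)
    fix e :: real assume e: "e > 0"
    have "((\<lambda>X. sum M X) \<longlongrightarrow> infsum M I) (finite_subsets_at_top I)"
      using M has_sum_def has_sum_infsum by blast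
    then have ev1: "\<forall>\<^sub>F X in finite_subsets_at_top I. dist (sum M X) (infsum M I) < e"
      using e tendstoD by blast
    have ev2: "\<forall>\<^sub>F X in finite_subsets_at_top I. finite X \<and> X \<subseteq> I" by auto
    show "\<forall>\<^sub>F X in finite_subsets_at_top I. \<forall>v\<in>S. dist (sum (\<lambda>p. g p v) X) (\<Sum>\<^sub>\<infinity>p\<in>I. g p v) < e"
      using ev1 ev2
    proof eventually_elim
      case (elim X)
      show ?case
      proof
        fix v assume v: "v \<in> S"
        have "(\<Sum>\<^sub>\<infinity>p\<in>I. g p v) = sum (\<lambda>p. g p v) X + (\<Sum>\<^sub>\<infinity>p\<in>I - X. g p v)"
          by (rule infsum_split_finite) (use elim sg v in auto)
        then have "dist (sum (\<lambda>p. g p v) X) (\<Sum>\<^sub>\<infinity>p\<in>I. g p v) = norm (\<Sum>\<^sub>\<infinity>p\<in>I - X. g p v)"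
          by (simp add: dist_norm)
        also have "\<dots> \<le> (\<Sum>\<^sub>\<infinity>p\<in>I - X. norm (g p v))"
          by (rule norm_infsum_bound) (use sg v in auto)
        also have "\<dots> \<le> (\<Sum>\<^sub>\<infinity>p\<in>I - X. M p)"
          by (rule infsum_mono) (use sg v bound summable_on_subset[OF M Diff_subset] in auto)
        also have "\<dots> = infsum M I - sum M X"
          using infsum_split_finite[OF M, of X] elim by simp
        also have "\<dots> < e" using elim by (simp add: dist_norm abs_less_iff)
        finally show "dist (sum (\<lambda>p. g p v) X) (\<Sum>\<^sub>\<infinity>p\<in>I. g p v) < e" .
      qed
    qed
  qed
qed

lemma infsum_deriv_ball:
  fixes g g' :: "'i \<Rightarrow> complex \<Rightarrow> complex"
  assumes M: "M summable_on I" and r: "r > 0"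
    and bound: "\<And>p w. p \<in> I \<Longrightarrow> w \<in> cball z r \<Longrightarrow> norm (g p w) \<le> M p"
    and der: "\<And>p w. p \<in> I \<Longrightarrow> w \<in> cball z r \<Longrightarrow> (g p has_field_derivative g' p w) (at w)"
    and w: "w \<in> ball z r"
  shows "(\<lambda>p. g' p w) summable_on I"
    "((\<lambda>w. \<Sum>\<^sub>\<infinity>p\<in>I. g p w) has_field_derivative (\<Sum>\<^sub>\<infinity>p\<in>I. g' p w)) (at w)"
proof -
  have ulim: "uniform_limit (cball z r) (\<lambda>X v. sum (\<lambda>p. g p v) X) (\<lambda>v. \<Sum>\<^sub>\<infinity>p\<in>I. g p v) (finite_subsets_at_top I)"
    by (rule infsum_uniform_limit[OF M bound])
  have cont: "\<forall>\<^sub>F X in finite_subsets_at_top I. continuous_on (cball z r) (\<lambda>v. sum (\<lambda>p. g p v) X) \<and>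
      (\<forall>w\<in>ball z r. ((\<lambda>v. sum (\<lambda>p. g p v) X) has_field_derivative (sum (\<lambda>p. g' p w) X)) (at w))"
  proof (rule eventually_finite_subsets_at_top_weakI, intro conjI ballI)
    fix X assume X: "finite X" "X \<subseteq> I"
    have "continuous_on (cball z r) (g p)" if "p \<in> X" for p
      using der X that by (intro continuous_at_imp_continuous_on ballI DERIV_isCont) blast
    then show "continuous_on (cball z r) (\<lambda>v. sum (\<lambda>p. g p v) X)"
      by (intro continuous_on_sum) auto
    fix w assume "w \<in> ball z r"
    then show "((\<lambda>v. sum (\<lambda>p. g p v) X) has_field_derivative (sum (\<lambda>p. g' p w) X)) (at w)"
      using der X by (intro DERIV_sum) auto
  qed
  obtain G where G: "\<And>w. w \<in> ball z r \<Longrightarrow> ((\<lambda>v. \<Sum>\<^sub>\<infinity>p\<in>I. g p v) has_field_derivative (G w)) (at w) \<and>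
      ((\<lambda>X. sum (\<lambda>p. g' p w) X) \<longlongrightarrow> G w) (finite_subsets_at_top I)"
    using has_complex_derivative_uniform_limit[OF cont ulim _ r] by auto
  have hs: "((\<lambda>p. g' p w) has_sum G w) I" using G[OF w] by (simp add: has_sum_def)
  then show "(\<lambda>p. g' p w) summable_on I" by (rule has_sum_imp_summable)
  have "(\<Sum>\<^sub>\<infinity>p\<in>I. g' p w) = G w" using hs by (rule infsumI)
  then show "((\<lambda>w. \<Sum>\<^sub>\<infinity>p\<in>I. g p w) has_field_derivative (\<Sum>\<^sub>\<infinity>p\<in>I. g' p w)) (at w)"
    using G[OF w] by simp
qed

lemma latt_series_deriv:
  fixes h h' :: "int \<times> int \<Rightarrow> complex \<Rightarrow> complex"
  assumes \<tau>: "Im \<tau> > 0" and U: "open U" and w: "w \<in> U"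
    and der: "\<And>p v. p \<in> I \<Longrightarrow> v \<in> U \<Longrightarrow> (h p has_field_derivative h' p v) (at v)"
    and bnd: "\<And>R. \<exists>K T. \<forall>p\<in>I. \<forall>v. norm v \<le> R \<longrightarrow> T \<le> norm (latt \<tau> p) \<longrightarrow>
                   norm (h p v) \<le> K / norm (latt \<tau> p) ^ 3"
  shows "(\<lambda>p. h p w) summable_on I" "(\<lambda>p. h' p w) summable_on I"
        "((\<lambda>v. \<Sum>\<^sub>\<infinity>p\<in>I. h p v) has_field_derivative (\<Sum>\<^sub>\<infinity>p\<in>I. h' p w)) (at w)"
proof -
  obtain r0 where r0: "r0 > 0" "cball w r0 \<subseteq> U" using U w open_contains_cball by blast
  define r where "r = min r0 1"
  have r: "r > 0" "cball w r \<subseteq> U" "r \<le> 1" using r0 by (auto simp: r_def)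
  define R where "R = norm w + 1"
  obtain K T where KT: "\<And>p v. p\<in>I \<Longrightarrow> norm v \<le> R \<Longrightarrow> T \<le> norm (latt \<tau> p) \<Longrightarrow>
                   norm (h p v) \<le> K / norm (latt \<tau> p) ^ 3"
    using bnd[of R] by blast
  define T' where "T' = max T 1"
  define F where "F = {p \<in> I. norm (latt \<tau> p) < T'}"
  define J where "J = I - F"
  have finF: "finite F"
    by (rule finite_subset[OF _ latt_finite[OF \<tau>, of T']]) (auto simp: F_def)
  have FI: "F \<subseteq> I" and IFJ: "I = F \<union> J" and disj: "F \<inter> J = {}" by (auto simp: F_def J_def)
  have J0: "J \<subseteq> UNIV - {(0,0)}"
  proof
    fix p assume "p \<in> J"
    then have "norm (latt \<tau> p) \<ge> 1" by (auto simp: J_def F_def T'_def)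
    then show "p \<in> UNIV - {(0,0)}" by auto
  qed
  define M where "M p = K * (1 / norm (latt \<tau> p) ^ 3)" for p
  have MJ: "M summable_on J"
    unfolding M_def by (rule summable_on_cmult_right, rule summable_on_subset[OF latt_summable[OF \<tau>] J0])
  have bJ: "norm (h p v) \<le> M p" if "p \<in> J" "v \<in> cball w r" for p v
  proof -
    have "norm v \<le> R" using that(2) r(3) norm_triangle_ineq2[of v w] by (auto simp: R_def dist_norm norm_minus_commute)
    moreover have "T \<le> norm (latt \<tau> p)" using that(1) by (auto simp: J_def F_def T'_def)
    ultimately show ?thesis using KT[of p v] that(1) by (auto simp: J_def M_def)
  qed
  have derJ: "(h p has_field_derivative h' p v) (at v)" if "p \<in> J" "v \<in> cball w r" for p v
  proof -
    have "p \<in> I" "v \<in> U" using that r(2) by (auto simp: J_def)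
    then show ?thesis by (rule der)
  qed
  have wb: "w \<in> ball w r" using r by simp
  have sJ: "(\<lambda>p. h p v) summable_on J" if "v \<in> cball w r" for v
  proof -
    have "(\<lambda>p. norm (h p v)) summable_on J"
      by (rule summable_on_comparison_test[OF MJ]) (use bJ that in auto)
    then show ?thesis by (rule abs_summable_summable)
  qed
  have sI: "(\<lambda>p. h p v) summable_on I" if "v \<in> cball w r" for v
    using summable_on_Un_disjoint[OF summable_on_finite[OF finF] sJ[OF that] disj] IFJ by simp
  then show "(\<lambda>p. h p w) summable_on I" using r by simp
  have dJ: "(\<lambda>p. h' p w) summable_on J"
     "((\<lambda>v. \<Sum>\<^sub>\<infinity>p\<in>J. h p v) has_field_derivative (\<Sum>\<^sub>\<infinity>p\<in>J. h' p w)) (at w)"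
    using infsum_deriv_ball[OF MJ r(1) bJ derJ wb] by auto
  show s'I: "(\<lambda>p. h' p w) summable_on I"
    using summable_on_Un_disjoint[OF summable_on_finite[OF finF] dJ(1) disj] IFJ by simp
  have dF: "((\<lambda>v. sum (\<lambda>p. h p v) F) has_field_derivative (sum (\<lambda>p. h' p w) F)) (at w)"
    using der FI w by (intro DERIV_sum) auto
  have "((\<lambda>v. sum (\<lambda>p. h p v) F + (\<Sum>\<^sub>\<infinity>p\<in>J. h p v)) has_field_derivative
          (sum (\<lambda>p. h' p w) F + (\<Sum>\<^sub>\<infinity>p\<in>J. h' p w))) (at w)"
    by (rule DERIV_add[OF dF dJ(2)])
  moreover have "sum (\<lambda>p. h' p w) F + (\<Sum>\<^sub>\<infinity>p\<in>J. h' p w) = (\<Sum>\<^sub>\<infinity>p\<in>I. h' p w)"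
    using infsum_split_finite[OF s'I finF FI] by (simp add: J_def)
  ultimately have d1: "((\<lambda>v. sum (\<lambda>p. h p v) F + (\<Sum>\<^sub>\<infinity>p\<in>J. h p v)) has_field_derivative
          (\<Sum>\<^sub>\<infinity>p\<in>I. h' p w)) (at w)" by simp
  show "((\<lambda>v. \<Sum>\<^sub>\<infinity>p\<in>I. h p v) has_field_derivative (\<Sum>\<^sub>\<infinity>p\<in>I. h' p w)) (at w)"
  proof (rule has_field_derivative_transform_within_open[OF d1 open_ball wb])
    fix v assume "v \<in> ball w r"
    then have "v \<in> cball w r" by simp
    then show "sum (\<lambda>p. h p v) F + (\<Sum>\<^sub>\<infinity>p\<in>J. h p v) = (\<Sum>\<^sub>\<infinity>p\<in>I. h p v)"
      using infsum_split_finite[OF sI finF FI] by (simp add: J_def)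
  qed
qed



lemma far:
  fixes v w :: complex
  assumes "norm v \<le> R" "2 * R \<le> norm w"
  shows "norm w / 2 \<le> norm (v - w)"
proof -
  have "norm w - norm v \<le> norm (v - w)" by (metis norm_minus_commute norm_triangle_ineq2)
  then show ?thesis using assms by linarith
qed

lemma quot_bound:
  fixes a b :: complex
  assumes "norm a \<le> A" "B > 0" "B \<le> norm b"
  shows "norm (a / b) \<le> A / B"
proof -
  have "0 \<le> A" using assms(1) norm_ge_zero order_trans by blast
  then have "norm a / norm b \<le> A / B" using assms by (intro frac_le) auto
  then show ?thesis by (simp add: norm_divide)
qed

lemma bound_h1:
  fixes v w :: complex
  assumes "norm v \<le> R" "2 * R + 1 \<le> norm w"
  shows "norm (1 / (v - w)^2 - 1 / w^2) \<le> (12 * R) / norm w ^ 3"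
proof -
  have R0: "R \<ge> 0" using assms(1) norm_ge_zero order_trans by blast
  have w0: "norm w > 0" using assms R0 by linarith
  have d: "norm w / 2 \<le> norm (v - w)" by (rule far) (use assms in auto)
  then have vw: "v - w \<noteq> 0" using w0 by auto
  have "1 / (v - w)^2 - 1 / w^2 = (v * (2 * w - v)) / (w^2 * (v - w)^2)"
    using vw w0 by (simp add: divide_simps) (simp add: algebra_simps power2_eq_square)
  also have "norm \<dots> \<le> (R * (3 * norm w)) / (norm w ^ 2 * (norm w / 2) ^ 2)"
  proof (rule quot_bound)
    have "norm (2 * w - v) \<le> 2 * norm w + norm v" by (metis norm_triangle_ineq4 norm_mult norm_numeral mult_2)
    also have "\<dots> \<le> 3 * norm w" using assms R0 by linarith
    finally have "norm (2 * w - v) \<le> 3 * norm w" .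
    then show "norm (v * (2 * w - v)) \<le> R * (3 * norm w)"
      using assms(1) R0 by (simp add: norm_mult mult_mono')
    show "0 < norm w ^ 2 * (norm w / 2) ^ 2" using w0 by simp
    show "norm w ^ 2 * (norm w / 2) ^ 2 \<le> norm (w^2 * (v - w)^2)"
      using d w0 by (simp add: norm_mult norm_power power_mono)
  qed
  also have "\<dots> = (12 * R) / norm w ^ 3" using w0 by (simp add: field_simps power2_eq_square power3_eq_cube)
  finally show ?thesis .
qed

lemma bound_h2:
  fixes v w :: complex
  assumes "norm v \<le> R" "2 * R + 1 \<le> norm w"
  shows "norm (1 / (v - w) + 1 / w + v / w^2) \<le> (2 * R^2) / norm w ^ 3"
proof -
  have R0: "R \<ge> 0" using assms(1) norm_ge_zero order_trans by blast
  have w0: "norm w > 0" using assms R0 by linarith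
  have d: "norm w / 2 \<le> norm (v - w)" by (rule far) (use assms in auto)
  then have vw: "v - w \<noteq> 0" using w0 by auto
  have "1 / (v - w) + 1 / w + v / w^2 = v^2 / (w^2 * (v - w))"
    using vw w0 by (simp add: divide_simps) (simp add: algebra_simps power2_eq_square)
  also have "norm \<dots> \<le> R^2 / (norm w ^ 2 * (norm w / 2))"
  proof (rule quot_bound)
    show "norm (v^2) \<le> R^2" using assms(1) by (simp add: norm_power power_mono)
    show "0 < norm w ^ 2 * (norm w / 2)" using w0 by simp
    show "norm w ^ 2 * (norm w / 2) \<le> norm (w^2 * (v - w))"
      using d w0 by (simp add: norm_mult norm_power)
  qed
  also have "\<dots> = (2 * R^2) / norm w ^ 3" using w0 by (simp add: field_simps power2_eq_square power3_eq_cube)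
  finally show ?thesis .
qed

lemma bound_h3:
  fixes v w :: complex
  assumes "norm v \<le> R" "2 * R + 1 \<le> norm w"
  shows "norm (c / (v - w)^k) \<le> (norm c * 2^k) / norm w ^ k"
proof -
  have R0: "R \<ge> 0" using assms(1) norm_ge_zero order_trans by blast
  have w0: "norm w > 0" using assms R0 by linarith
  have d: "norm w / 2 \<le> norm (v - w)" by (rule far) (use assms in auto)
  have "norm (c / (v - w)^k) \<le> norm c / (norm w / 2) ^ k"
    by (rule quot_bound) (use d w0 in \<open>auto simp: norm_power power_mono\<close>)
  also have "\<dots> = (norm c * 2^k) / norm w ^ k" using w0 by (simp add: field_simps power_divide)
  finally show ?thesis .
qed



lemma deriv_inv_pow:
  fixes a c v :: complex
  assumes "v \<noteq> a"
  shows "((\<lambda>v. c / (v - a)^k) has_field_derivative (- of_nat k * c / (v - a)^(Suc k))) (at v)"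
proof -
  have "((\<lambda>v. c * inverse ((v - a)^k)) has_field_derivative
         (c * (- (inverse ((v - a)^k) * (of_nat k * (v - a)^(k - 1) * 1) * inverse ((v - a)^k))))) (at v)"
    using assms by (intro DERIV_cmult DERIV_inverse_fun DERIV_power derivative_eq_intros) auto
  moreover have "c * (- (inverse ((v - a)^k) * (of_nat k * (v - a)^(k - 1) * 1) * inverse ((v - a)^k)))
      = - of_nat k * c / (v - a)^(Suc k)"
  proof (cases k)
    case 0 then show ?thesis by simp
  next
    case (Suc j)
    define x where "x = v - a"
    have x: "x \<noteq> 0" using assms by (simp add: x_def)
    have "c * (- (inverse (x^k) * (of_nat k * x^(k - 1) * 1) * inverse (x^k))) = - of_nat k * c / x^(Suc k)"
      using x by (simp add: Suc field_simps power_Suc)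
    then show ?thesis by (simp add: x_def)
  qed
  moreover have f: "(\<lambda>v. c / (v - a)^k) = (\<lambda>v. c * inverse ((v - a)^k))" by (simp add: divide_inverse)
  ultimately show ?thesis by (simp only: f)
qed

definition LL :: "complex \<Rightarrow> complex set" where "LL \<tau> = range (latt \<tau>)"

definition Qf :: "complex \<Rightarrow> complex \<Rightarrow> complex" where
  "Qf \<tau> z = (\<Sum>\<^sub>\<infinity>p\<in>UNIV. -2 / (z - latt \<tau> p)^3)"

lemma LL_open: "Im \<tau> > 0 \<Longrightarrow> open (- LL \<tau>)"
  using latt_closed by (simp add: LL_def open_Compl)

lemma notLL: "z \<notin> LL \<tau> \<Longrightarrow> z \<noteq> latt \<tau> p"
  by (auto simp: LL_def)

lemma notLL0: "z \<notin> LL \<tau> \<Longrightarrow> z \<noteq> 0"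
  using notLL[of z \<tau> "(0,0)"] by simp

lemma UNIV_insert0: "UNIV = insert (0::int,0::int) (UNIV - {(0,0)})" by auto

lemma wpW_deriv:
  assumes \<tau>: "Im \<tau> > 0" and z: "z \<notin> LL \<tau>"
  shows "(wpW \<tau> has_field_derivative Qf \<tau> z) (at z)"
    and "(\<lambda>p. 1 / (z - latt \<tau> p)^2 - 1 / (latt \<tau> p)^2) summable_on (UNIV - {(0,0)})"
    and "(\<lambda>p. -2 / (z - latt \<tau> p)^3) summable_on (UNIV - {(0,0)})"
proof -
  define h where "h p v = 1 / (v - latt \<tau> p)^2 - 1 / (latt \<tau> p)^2" for p v
  define h' where "h' p v = -2 / (v - latt \<tau> p)^3" for p v
  have der: "(h p has_field_derivative h' p v) (at v)" if "p \<in> UNIV - {(0,0)}" "v \<in> - LL \<tau>" for p v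
  proof -
    have "v \<noteq> latt \<tau> p" using that notLL by auto
    then have "((\<lambda>v. 1 / (v - latt \<tau> p)^2 - 1 / (latt \<tau> p)^2) has_field_derivative
        (- of_nat 2 * 1 / (v - latt \<tau> p)^(Suc 2) - 0)) (at v)"
      by (intro DERIV_diff deriv_inv_pow DERIV_const)
    then show ?thesis unfolding h_def h'_def by (simp add: eval_nat_numeral)
  qed
  have bnd: "\<exists>K T. \<forall>p\<in>UNIV - {(0,0)}. \<forall>v. norm v \<le> R \<longrightarrow> T \<le> norm (latt \<tau> p) \<longrightarrow>
                   norm (h p v) \<le> K / norm (latt \<tau> p) ^ 3" for R
    by (rule exI[of _ "12 * R"], rule exI[of _ "2 * R + 1"]) (auto simp: h_def intro: bound_h1)
  note L = latt_series_deriv[OF \<tau> LL_open[OF \<tau>] _ der bnd, of z]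
  show "(\<lambda>p. 1 / (z - latt \<tau> p)^2 - 1 / (latt \<tau> p)^2) summable_on (UNIV - {(0,0)})"
    using L(1) z by (simp add: h_def)
  show s3: "(\<lambda>p. -2 / (z - latt \<tau> p)^3) summable_on (UNIV - {(0,0)})"
    using L(2) z by (simp add: h'_def)
  have z0: "z \<noteq> 0" using notLL0[OF z] .
  have "((\<lambda>v. 1 / v^2 + (\<Sum>\<^sub>\<infinity>p\<in>UNIV - {(0,0)}. h p v)) has_field_derivative
         (-2 / z^3 + (\<Sum>\<^sub>\<infinity>p\<in>UNIV - {(0,0)}. h' p z))) (at z)"
  proof (rule DERIV_add)
    show "((\<lambda>v. 1 / v^2) has_field_derivative -2 / z^3) (at z)"
      using deriv_inv_pow[of z 0 1 2] z0 by (simp add: eval_nat_numeral)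
    show "((\<lambda>v. \<Sum>\<^sub>\<infinity>p\<in>UNIV - {(0,0)}. h p v) has_field_derivative (\<Sum>\<^sub>\<infinity>p\<in>UNIV - {(0,0)}. h' p z)) (at z)"
      using L(3) z by simp
  qed
  moreover have "(\<lambda>v. 1 / v^2 + (\<Sum>\<^sub>\<infinity>p\<in>UNIV - {(0,0)}. h p v)) = wpW \<tau>"
    by (simp add: wpW_def h_def fun_eq_iff)
  moreover have "-2 / z^3 + (\<Sum>\<^sub>\<infinity>p\<in>UNIV - {(0,0)}. h' p z) = Qf \<tau> z"
  proof -
    have "Qf \<tau> z = (\<Sum>\<^sub>\<infinity>p\<in>insert (0,0) (UNIV - {(0,0)}). h' p z)"
      unfolding Qf_def h'_def by (subst UNIV_insert0[symmetric]) simp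
    also have "\<dots> = h' (0,0) z + (\<Sum>\<^sub>\<infinity>p\<in>UNIV - {(0,0)}. h' p z)"
      by (rule infsum_insert) (use s3 in \<open>auto simp: h'_def\<close>)
    finally show ?thesis by (simp add: h'_def)
  qed
  ultimately show "(wpW \<tau> has_field_derivative Qf \<tau> z) (at z)" by simp
qed

lemma zetaW_deriv:
  assumes \<tau>: "Im \<tau> > 0" and z: "z \<notin> LL \<tau>"
  shows "(zetaW \<tau> has_field_derivative - wpW \<tau> z) (at z)"
    and "(\<lambda>p. 1 / (z - latt \<tau> p) + 1 / latt \<tau> p + z / (latt \<tau> p)^2) summable_on (UNIV - {(0,0)})"
proof -
  define h where "h p v = 1 / (v - latt \<tau> p) + 1 / latt \<tau> p + v / (latt \<tau> p)^2" for p v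
  define h' where "h' p v = - (1 / (v - latt \<tau> p)^2 - 1 / (latt \<tau> p)^2)" for p v
  have der: "(h p has_field_derivative h' p v) (at v)" if "p \<in> UNIV - {(0,0)}" "v \<in> - LL \<tau>" for p v
  proof -
    have "v \<noteq> latt \<tau> p" using that notLL by auto
    then have "((\<lambda>v. 1 / (v - latt \<tau> p)^1 + 1 / latt \<tau> p + v / (latt \<tau> p)^2) has_field_derivative
        (- of_nat 1 * 1 / (v - latt \<tau> p)^(Suc 1) + 0 + 1 / (latt \<tau> p)^2)) (at v)"
      by (intro DERIV_add deriv_inv_pow DERIV_const DERIV_cdivide DERIV_ident)
    then show ?thesis unfolding h_def h'_def by (simp add: eval_nat_numeral)
  qed
  have bnd: "\<exists>K T. \<forall>p\<in>UNIV - {(0,0)}. \<forall>v. norm v \<le> R \<longrightarrow> T \<le> norm (latt \<tau> p) \<longrightarrow>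
                   norm (h p v) \<le> K / norm (latt \<tau> p) ^ 3" for R
    by (rule exI[of _ "2 * R^2"], rule exI[of _ "2 * R + 1"]) (auto simp: h_def intro: bound_h2)
  note L = latt_series_deriv[OF \<tau> LL_open[OF \<tau>] _ der bnd, of z]
  show "(\<lambda>p. 1 / (z - latt \<tau> p) + 1 / latt \<tau> p + z / (latt \<tau> p)^2) summable_on (UNIV - {(0,0)})"
    using L(1) z by (simp add: h_def)
  have z0: "z \<noteq> 0" using notLL0[OF z] .
  have "((\<lambda>v. 1 / v + (\<Sum>\<^sub>\<infinity>p\<in>UNIV - {(0,0)}. h p v)) has_field_derivative
         (- 1 / z^2 + (\<Sum>\<^sub>\<infinity>p\<in>UNIV - {(0,0)}. h' p z))) (at z)"
  proof (rule DERIV_add)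
    show "((\<lambda>v. 1 / v) has_field_derivative - 1 / z^2) (at z)"
      using deriv_inv_pow[of z 0 1 1] z0 by (simp add: eval_nat_numeral)
    show "((\<lambda>v. \<Sum>\<^sub>\<infinity>p\<in>UNIV - {(0,0)}. h p v) has_field_derivative (\<Sum>\<^sub>\<infinity>p\<in>UNIV - {(0,0)}. h' p z)) (at z)"
      using L(3) z by simp
  qed
  moreover have "(\<lambda>v. 1 / v + (\<Sum>\<^sub>\<infinity>p\<in>UNIV - {(0,0)}. h p v)) = zetaW \<tau>"
    by (simp add: zetaW_def h_def fun_eq_iff)
  moreover have "- 1 / z^2 + (\<Sum>\<^sub>\<infinity>p\<in>UNIV - {(0,0)}. h' p z) = - wpW \<tau> z"
    unfolding h'_def infsum_uminus wpW_def by simp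
  ultimately show "(zetaW \<tau> has_field_derivative - wpW \<tau> z) (at z)" by simp
qed

lemma Qf_deriv:
  assumes \<tau>: "Im \<tau> > 0" and z: "z \<notin> LL \<tau>"
  shows "\<exists>D. (Qf \<tau> has_field_derivative D) (at z)"
proof -
  define h where "h p v = -2 / (v - latt \<tau> p)^3" for p v
  define h' where "h' p v = - of_nat 3 * (-2) / (v - latt \<tau> p)^(Suc 3)" for p v
  have der: "(h p has_field_derivative h' p v) (at v)" if "p \<in> UNIV" "v \<in> - LL \<tau>" for p v
  proof -
    have "v \<noteq> latt \<tau> p" using that notLL by auto
    then show ?thesis unfolding h_def h'_def by (rule deriv_inv_pow)
  qed
  have bnd: "\<exists>K T. \<forall>p\<in>UNIV. \<forall>v. norm v \<le> R \<longrightarrow> T \<le> norm (latt \<tau> p) \<longrightarrow>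
                   norm (h p v) \<le> K / norm (latt \<tau> p) ^ 3" for R
  proof (rule exI[of _ "16"], rule exI[of _ "2 * R + 1"], intro ballI allI impI)
    fix p and v :: complex assume "norm v \<le> R" "2 * R + 1 \<le> norm (latt \<tau> p)"
    from bound_h3[OF this, of "-2" 3] show "norm (h p v) \<le> 16 / norm (latt \<tau> p) ^ 3"
      by (simp add: h_def)
  qed
  note L = latt_series_deriv[OF \<tau> LL_open[OF \<tau>] _ der bnd, of z]
  have "Qf \<tau> = (\<lambda>v. \<Sum>\<^sub>\<infinity>p\<in>UNIV. h p v)" by (simp add: Qf_def h_def fun_eq_iff)
  then show ?thesis using L(3) z by auto
qed

lemma Qf_isCont: "Im \<tau> > 0 \<Longrightarrow> z \<notin> LL \<tau> \<Longrightarrow> isCont (Qf \<tau>) z"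
  using Qf_deriv DERIV_isCont by blast
lemma wpW_isCont: "Im \<tau> > 0 \<Longrightarrow> z \<notin> LL \<tau> \<Longrightarrow> isCont (wpW \<tau>) z"
  using wpW_deriv(1) DERIV_isCont by blast
lemma zetaW_isCont: "Im \<tau> > 0 \<Longrightarrow> z \<notin> LL \<tau> \<Longrightarrow> isCont (zetaW \<tau>) z"
  using zetaW_deriv(1) DERIV_isCont by blast



definition negp :: "int \<times> int \<Rightarrow> int \<times> int" where "negp p = (- fst p, - snd p)"

lemma latt_negp: "latt \<tau> (negp p) = - latt \<tau> p"
  by (simp add: negp_def latt_neg)

lemma negp_bij: "bij_betw negp (UNIV - {(0,0)}) (UNIV - {(0,0)})" "bij_betw negp UNIV UNIV"
proof -
  have inv: "negp (negp p) = p" for p by (simp add: negp_def)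
  show "bij_betw negp (UNIV - {(0,0)}) (UNIV - {(0,0)})"
    by (rule bij_betwI[of _ _ _ negp]) (auto simp: inv negp_def)
  show "bij_betw negp UNIV UNIV"
    by (rule bij_betwI[of _ _ _ negp]) (auto simp: inv)
qed

lemma odd_sum_zero:
  fixes g :: "int \<times> int \<Rightarrow> complex"
  assumes "\<And>p. g (negp p) = - g p"
  shows "infsum g (UNIV - {(0,0)}) = 0"
proof -
  have "infsum g (UNIV - {(0,0)}) = infsum (\<lambda>p. g (negp p)) (UNIV - {(0,0)})"
    by (rule infsum_reindex_bij_betw[symmetric, OF negp_bij(1)])
  also have "\<dots> = - infsum g (UNIV - {(0,0)})" by (simp add: assms infsum_uminus)
  finally show ?thesis by simp
qed

lemma wpW_even: "wpW \<tau> (- z) = wpW \<tau> z"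
proof -
  let ?g = "\<lambda>p. 1 / (- z - latt \<tau> p)^2 - 1 / (latt \<tau> p)^2"
  have "infsum ?g (UNIV - {(0,0)}) = infsum (\<lambda>p. ?g (negp p)) (UNIV - {(0,0)})"
    by (rule infsum_reindex_bij_betw[symmetric, OF negp_bij(1)])
  also have "(\<lambda>p. ?g (negp p)) = (\<lambda>p. 1 / (z - latt \<tau> p)^2 - 1 / (latt \<tau> p)^2)"
    by (simp add: latt_negp fun_eq_iff power2_eq_square algebra_simps)
  finally show ?thesis by (simp add: wpW_def)
qed

lemma neg_h2: fixes z w :: complex shows "1 / (- z - (- w)) + 1 / (- w) + - z / (- w)^2 = - (1/(z - w) + 1/w + z/w^2)"
proof -
  have e: "- z - (- w) = - (z - w)" by simp
  have "1 / (- (z - w)) = - (1 / (z - w))" by (rule divide_minus_right)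
  moreover have "1 / (- w) = - (1 / w)" by (rule divide_minus_right)
  moreover have "- z / (- w)^2 = - (z / w^2)" by simp
  ultimately show ?thesis unfolding e by simp
qed

lemma neg_h2': "1 / (- z - latt \<tau> (negp p)) + 1 / latt \<tau> (negp p) + - z / (latt \<tau> (negp p))^2 = - (1 / (z - latt \<tau> p) + 1 / latt \<tau> p + z / (latt \<tau> p)^2)"
  unfolding latt_negp by (rule neg_h2)

lemma zetaW_odd: "zetaW \<tau> (- z) = - zetaW \<tau> z"
proof -
  have "(\<Sum>\<^sub>\<infinity>p\<in>UNIV - {(0,0)}. 1 / (- z - latt \<tau> p) + 1 / latt \<tau> p + - z / (latt \<tau> p)^2)
      = (\<Sum>\<^sub>\<infinity>p\<in>UNIV - {(0,0)}. 1 / (- z - latt \<tau> (negp p)) + 1 / latt \<tau> (negp p) + - z / (latt \<tau> (negp p))^2)"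
    by (rule infsum_reindex_bij_betw[symmetric, OF negp_bij(1)])
  also have "\<dots> = (\<Sum>\<^sub>\<infinity>p\<in>UNIV - {(0,0)}. - (1 / (z - latt \<tau> p) + 1 / latt \<tau> p + z / (latt \<tau> p)^2))"
    by (simp only: neg_h2')
  also have "\<dots> = - (\<Sum>\<^sub>\<infinity>p\<in>UNIV - {(0,0)}. 1 / (z - latt \<tau> p) + 1 / latt \<tau> p + z / (latt \<tau> p)^2)"
    by (rule infsum_uminus)
  finally have eq: "(\<Sum>\<^sub>\<infinity>p\<in>UNIV - {(0,0)}. 1 / (- z - latt \<tau> p) + 1 / latt \<tau> p + - z / (latt \<tau> p)^2)
      = - (\<Sum>\<^sub>\<infinity>p\<in>UNIV - {(0,0)}. 1 / (z - latt \<tau> p) + 1 / latt \<tau> p + z / (latt \<tau> p)^2)" .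
  show ?thesis unfolding zetaW_def eq by simp
qed

lemma Qf_odd: "Qf \<tau> (- z) = - Qf \<tau> z"
proof -
  let ?g = "\<lambda>p. -2 / (- z - latt \<tau> p)^3"
  have "infsum ?g UNIV = infsum (\<lambda>p. ?g (negp p)) UNIV"
    by (rule infsum_reindex_bij_betw[symmetric, OF negp_bij(2)])
  also have "(\<lambda>p. ?g (negp p)) = (\<lambda>p. - (-2 / (z - latt \<tau> p)^3))"
  proof
    fix p
    have "(- z + latt \<tau> p)^3 = - ((z - latt \<tau> p)^3)" by (simp add: power3_eq_cube algebra_simps)
    then show "?g (negp p) = - (-2 / (z - latt \<tau> p)^3)" by (simp add: latt_negp)
  qed
  finally show ?thesis by (simp add: Qf_def infsum_uminus)
qed

lemma Qf_periodic: "Qf \<tau> (z + latt \<tau> q) = Qf \<tau> z"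
proof -
  define sh where "sh p = (fst p - fst q, snd p - snd q)" for p
  have bij: "bij_betw sh UNIV UNIV"
    by (rule bij_betwI[of _ _ _ "\<lambda>p. (fst p + fst q, snd p + snd q)"]) (auto simp: sh_def)
  have "Qf \<tau> z = infsum (\<lambda>p. (\<lambda>p'. -2 / (z - latt \<tau> p')^3) (sh p)) UNIV"
    unfolding Qf_def by (rule infsum_reindex_bij_betw[symmetric, OF bij])
  also have "\<dots> = Qf \<tau> (z + latt \<tau> q)"
    unfolding Qf_def sh_def latt_diff by (simp add: algebra_simps)
  finally show ?thesis by simp
qed

lemma LL_neg: "- z \<in> LL \<tau> \<longleftrightarrow> z \<in> LL \<tau>"
proof
  assume "- z \<in> LL \<tau>" then obtain p where "- z = latt \<tau> p" by (auto simp: LL_def)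
  then have "z = latt \<tau> (negp p)" by (metis latt_negp minus_minus)
  then show "z \<in> LL \<tau>" by (auto simp: LL_def)
next
  assume "z \<in> LL \<tau>" then obtain p where "z = latt \<tau> p" by (auto simp: LL_def)
  then have "- z = latt \<tau> (negp p)" by (simp add: latt_negp)
  then show "- z \<in> LL \<tau>" by (auto simp: LL_def)
qed

lemma LL_shift: "z + latt \<tau> q \<in> LL \<tau> \<longleftrightarrow> z \<in> LL \<tau>"
proof
  assume "z + latt \<tau> q \<in> LL \<tau>" then obtain p where "z + latt \<tau> q = latt \<tau> p" by (auto simp: LL_def)
  then have "z = latt \<tau> (fst p - fst q, snd p - snd q)" by (simp add: latt_diff algebra_simps)
  then show "z \<in> LL \<tau>" by (auto simp: LL_def)
next
  assume "z \<in> LL \<tau>" then obtain p where "z = latt \<tau> p" by (auto simp: LL_def)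
  then have "z + latt \<tau> q = latt \<tau> (fst p + fst q, snd p + snd q)" by (simp add: latt_add)
  then show "z + latt \<tau> q \<in> LL \<tau>" by (auto simp: LL_def)
qed

lemma LL_add: "z \<in> LL \<tau> \<Longrightarrow> w \<in> LL \<tau> \<Longrightarrow> z + w \<in> LL \<tau>"
  using LL_shift by (auto simp: LL_def)

lemma LL_connected: "connected (- LL \<tau>)"
proof -
  have "connected (UNIV - LL \<tau>)"
    by (rule connected_open_diff_countable) (auto simp: LL_def)
  then show ?thesis by (simp add: Compl_eq_Diff_UNIV)
qed

lemma not_half:
  assumes "Im \<tau> > 0"
  shows "- latt \<tau> (1,0) / 2 \<notin> LL \<tau>" "- latt \<tau> (0,1) / 2 \<notin> LL \<tau>"
proof -
  show "- latt \<tau> (1,0) / 2 \<notin> LL \<tau>"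
  proof
    assume "- latt \<tau> (1,0) / 2 \<in> LL \<tau>"
    then obtain p where p: "latt \<tau> p = - 1 / 2" by (auto simp: LL_def latt_one)
    have "of_int (snd p) * Im \<tau> = 0" using arg_cong[OF p, of Im] by (simp add: latt_Im)
    then have "snd p = 0" using assms by simp
    then have "real_of_int (fst p) = - 1 / 2" using arg_cong[OF p, of Re] by (simp add: latt_Re)
    then have "real_of_int (2 * fst p) = real_of_int (- 1)" by simp
    then have "2 * fst p = - 1" by (simp only: of_int_eq_iff)
    then show False by presburger
  qed
  show "- latt \<tau> (0,1) / 2 \<notin> LL \<tau>"
  proof
    assume "- latt \<tau> (0,1) / 2 \<in> LL \<tau>"
    then obtain p where p: "latt \<tau> p = - \<tau> / 2" by (auto simp: LL_def latt_tau)
    have "of_int (snd p) * Im \<tau> = - Im \<tau> / 2" using arg_cong[OF p, of Im] by (simp add: latt_Im)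
    then have "Im \<tau> * (2 * real_of_int (snd p) + 1) = 0" by (simp add: algebra_simps)
    then have "2 * real_of_int (snd p) + 1 = 0" using assms by simp
    then have "real_of_int (2 * snd p) = real_of_int (- 1)" by simp
    then have "2 * snd p = - 1" by (simp only: of_int_eq_iff)
    then show False by presburger
  qed
qed

lemma wpW_period:
  assumes \<tau>: "Im \<tau> > 0" and h: "- latt \<tau> q / 2 \<notin> LL \<tau>" and z: "z \<notin> LL \<tau>"
  shows "wpW \<tau> (z + latt \<tau> q) = wpW \<tau> z"
proof -
  let ?w = "latt \<tau> q"
  let ?f = "\<lambda>z. wpW \<tau> (z + ?w) - wpW \<tau> z"
  have der: "(?f has_field_derivative 0) (at x)" if "x \<in> - LL \<tau>" for x
  proof -
    have x: "x \<notin> LL \<tau>" "x + ?w \<notin> LL \<tau>" using that LL_shift by auto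
    have "((\<lambda>z. wpW \<tau> (z + ?w)) has_field_derivative Qf \<tau> (x + ?w) * 1) (at x)"
      by (rule DERIV_shift[THEN iffD1]) (simp add: wpW_deriv(1)[OF \<tau> x(2)])
    then have "(?f has_field_derivative Qf \<tau> (x + ?w) * 1 - Qf \<tau> x) (at x)"
      by (rule DERIV_diff[OF _ wpW_deriv(1)[OF \<tau> x(1)]])
    then show ?thesis by (simp add: Qf_periodic)
  qed
  have "\<exists>c. \<forall>x\<in>- LL \<tau>. ?f x = c"
  proof (rule DERIV_zero_connected_constant[OF LL_connected LL_open[OF \<tau>], of "{}"])
    show "continuous_on (- LL \<tau>) ?f"
      using der by (intro continuous_at_imp_continuous_on ballI DERIV_isCont) blast
  qed (use der in auto)
  then obtain c where c: "\<And>x. x \<notin> LL \<tau> \<Longrightarrow> ?f x = c" by auto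
  have "c = ?f (- ?w / 2)" using c[OF h] by simp
  also have "\<dots> = wpW \<tau> (?w / 2) - wpW \<tau> (- (?w / 2))" by (simp add: field_simps)
  also have "\<dots> = 0" by (simp only: wpW_even) simp
  finally show ?thesis using c[OF z] by simp
qed

lemma zetaW_quasi:
  assumes \<tau>: "Im \<tau> > 0" and h: "- latt \<tau> q / 2 \<notin> LL \<tau>"
  obtains \<eta> where "\<And>z. z \<notin> LL \<tau> \<Longrightarrow> zetaW \<tau> (z + latt \<tau> q) = zetaW \<tau> z + \<eta>"
proof -
  let ?w = "latt \<tau> q"
  let ?f = "\<lambda>z. zetaW \<tau> (z + ?w) - zetaW \<tau> z"
  have der: "(?f has_field_derivative 0) (at x)" if "x \<in> - LL \<tau>" for x
  proof -
    have x: "x \<notin> LL \<tau>" "x + ?w \<notin> LL \<tau>" using that LL_shift by auto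
    have "((\<lambda>z. zetaW \<tau> (z + ?w)) has_field_derivative - wpW \<tau> (x + ?w) * 1) (at x)"
      by (rule DERIV_shift[THEN iffD1]) (simp add: zetaW_deriv(1)[OF \<tau> x(2)])
    then have "(?f has_field_derivative - wpW \<tau> (x + ?w) * 1 - - wpW \<tau> x) (at x)"
      by (rule DERIV_diff[OF _ zetaW_deriv(1)[OF \<tau> x(1)]])
    then show ?thesis by (simp add: wpW_period[OF \<tau> h x(1)])
  qed
  have "\<exists>c. \<forall>x\<in>- LL \<tau>. ?f x = c"
  proof (rule DERIV_zero_connected_constant[OF LL_connected LL_open[OF \<tau>], of "{}"])
    show "continuous_on (- LL \<tau>) ?f"
      using der by (intro continuous_at_imp_continuous_on ballI DERIV_isCont) blast
  qed (use der in auto)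
  then obtain c where c: "\<And>x. x \<notin> LL \<tau> \<Longrightarrow> ?f x = c" by auto
  show ?thesis by (rule that[of c]) (use c in \<open>auto simp: algebra_simps\<close>)
qed



definition Af :: "complex \<Rightarrow> complex \<Rightarrow> complex" where
  "Af \<tau> v = (\<Sum>\<^sub>\<infinity>p\<in>UNIV - {(0,0)}. 1 / (v - latt \<tau> p)^2 - 1 / (latt \<tau> p)^2)"
definition c1 :: "complex \<Rightarrow> complex \<Rightarrow> complex" where
  "c1 \<tau> v = (\<Sum>\<^sub>\<infinity>p\<in>UNIV - {(0,0)}. (1 / (latt \<tau> p)^2) / (v - latt \<tau> p))"
definition c4 :: "complex \<Rightarrow> complex \<Rightarrow> complex" where
  "c4 \<tau> v = (\<Sum>\<^sub>\<infinity>p\<in>UNIV - {(0,0)}. -2 / (v - latt \<tau> p)^3)"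
definition c3 :: "complex \<Rightarrow> complex \<Rightarrow> complex \<Rightarrow> complex" where
  "c3 \<tau> b u = (\<Sum>\<^sub>\<infinity>p\<in>UNIV - {(0,0)}. (1 / (b - latt \<tau> p)^2) / (u - latt \<tau> p))"

lemma wpW_Af: "wpW \<tau> v = 1 / v^2 + Af \<tau> v"
  by (simp add: wpW_def Af_def)

lemma ball_notlatt:
  assumes "Im \<tau> > 0"
  obtains \<delta> where "\<delta> > 0" "\<And>p v. p \<in> UNIV - {(0,0)} \<Longrightarrow> v \<in> ball 0 \<delta> \<Longrightarrow> v \<noteq> latt \<tau> p"
proof -
  obtain \<delta> where d: "\<delta> > 0" "\<And>p. p \<noteq> (0,0) \<Longrightarrow> \<delta> \<le> norm (latt \<tau> p)"
    using latt_nonzero_lower[OF assms] by blast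
  show ?thesis
  proof (rule that[OF d(1)])
    fix p :: "int \<times> int" and v assume "p \<in> UNIV - {(0,0)}" "v \<in> ball (0::complex) \<delta>"
    then have "norm v < norm (latt \<tau> p)" using d(2)[of p] by auto
    then show "v \<noteq> latt \<tau> p" by auto
  qed
qed

lemma c1_cont:
  assumes \<tau>: "Im \<tau> > 0"
  shows "isCont (c1 \<tau>) 0" "c1 \<tau> 0 = 0"
proof -
  obtain \<delta> where d: "\<delta> > 0" "\<And>p v. p \<in> UNIV - {(0,0)} \<Longrightarrow> v \<in> ball 0 \<delta> \<Longrightarrow> v \<noteq> latt \<tau> p"
    using ball_notlatt[OF \<tau>] by blast
  define h where "h p v = (1 / (latt \<tau> p)^2) / (v - latt \<tau> p)^1" for p v
  define h' where "h' p v = - of_nat 1 * (1 / (latt \<tau> p)^2) / (v - latt \<tau> p)^(Suc 1)" for p v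
  have der: "(h p has_field_derivative h' p v) (at v)" if "p \<in> UNIV - {(0,0)}" "v \<in> ball 0 \<delta>" for p v
    unfolding h_def h'_def by (rule deriv_inv_pow) (use d that in auto)
  have bnd: "\<exists>K T. \<forall>p\<in>UNIV - {(0,0)}. \<forall>v. norm v \<le> R \<longrightarrow> T \<le> norm (latt \<tau> p) \<longrightarrow>
                   norm (h p v) \<le> K / norm (latt \<tau> p) ^ 3" for R
  proof (rule exI[of _ "2"], rule exI[of _ "2 * R + 1"], intro ballI allI impI)
    fix p and v :: complex assume a: "norm v \<le> R" "2 * R + 1 \<le> norm (latt \<tau> p)"
    have R0: "R \<ge> 0" using a(1) norm_ge_zero order_trans by blast
    have w0: "norm (latt \<tau> p) > 0" using a R0 by linarith
    from bound_h3[OF a, of "1 / (latt \<tau> p)^2" 1]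
    have "norm (h p v) \<le> norm (1 / (latt \<tau> p)^2) * 2 ^ 1 / norm (latt \<tau> p) ^ 1" by (simp add: h_def)
    also have "\<dots> = 2 / norm (latt \<tau> p) ^ 3" using w0 by (simp add: norm_divide norm_power) (simp add: field_simps power3_eq_cube power2_eq_square)
    finally show "norm (h p v) \<le> 2 / norm (latt \<tau> p) ^ 3" .
  qed
  have z0: "0 \<in> ball (0::complex) \<delta>" using d(1) by simp
  note L = latt_series_deriv[OF \<tau> open_ball z0 der bnd]
  have "c1 \<tau> = (\<lambda>v. \<Sum>\<^sub>\<infinity>p\<in>UNIV - {(0,0)}. h p v)" by (simp add: c1_def h_def fun_eq_iff)
  then show "isCont (c1 \<tau>) 0" using L(3) DERIV_isCont by auto
  show "c1 \<tau> 0 = 0" unfolding c1_def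
    by (rule odd_sum_zero) (simp add: latt_negp)
qed

lemma Af_lim:
  assumes \<tau>: "Im \<tau> > 0"
  shows "((\<lambda>a. Af \<tau> a / a) \<longlongrightarrow> 0) (at 0)" "isCont (Af \<tau>) 0" "Af \<tau> 0 = 0"
proof -
  obtain \<delta> where d: "\<delta> > 0" "\<And>p v. p \<in> UNIV - {(0,0)} \<Longrightarrow> v \<in> ball 0 \<delta> \<Longrightarrow> v \<noteq> latt \<tau> p"
    using ball_notlatt[OF \<tau>] by blast
  define h where "h p v = 1 / (v - latt \<tau> p)^2 - 1 / (latt \<tau> p)^2" for p v
  define h' where "h' p v = -2 / (v - latt \<tau> p)^3" for p v
  have der: "(h p has_field_derivative h' p v) (at v)" if "p \<in> UNIV - {(0,0)}" "v \<in> ball 0 \<delta>" for p v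
  proof -
    have "v \<noteq> latt \<tau> p" using that d by auto
    then have "((\<lambda>v. 1 / (v - latt \<tau> p)^2 - 1 / (latt \<tau> p)^2) has_field_derivative
        (- of_nat 2 * 1 / (v - latt \<tau> p)^(Suc 2) - 0)) (at v)"
      by (intro DERIV_diff deriv_inv_pow DERIV_const)
    then show ?thesis unfolding h_def h'_def by (simp add: eval_nat_numeral)
  qed
  have bnd: "\<exists>K T. \<forall>p\<in>UNIV - {(0,0)}. \<forall>v. norm v \<le> R \<longrightarrow> T \<le> norm (latt \<tau> p) \<longrightarrow>
                   norm (h p v) \<le> K / norm (latt \<tau> p) ^ 3" for R
    by (rule exI[of _ "12 * R"], rule exI[of _ "2 * R + 1"]) (auto simp: h_def intro: bound_h1)
  have z0: "0 \<in> ball (0::complex) \<delta>" using d(1) by simp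
  note L = latt_series_deriv[OF \<tau> open_ball z0 der bnd]
  have eqA: "Af \<tau> = (\<lambda>v. \<Sum>\<^sub>\<infinity>p\<in>UNIV - {(0,0)}. h p v)" by (simp add: Af_def h_def fun_eq_iff)
  have D: "(Af \<tau> has_field_derivative (\<Sum>\<^sub>\<infinity>p\<in>UNIV - {(0,0)}. h' p 0)) (at 0)"
    using L(3) eqA by auto
  have D0: "(\<Sum>\<^sub>\<infinity>p\<in>UNIV - {(0,0)}. h' p 0) = 0"
    unfolding h'_def by (rule odd_sum_zero) (simp add: latt_negp power3_eq_cube)
  show A0: "Af \<tau> 0 = 0" by (simp add: Af_def)
  show "isCont (Af \<tau>) 0" using D DERIV_isCont by blast
  show "((\<lambda>a. Af \<tau> a / a) \<longlongrightarrow> 0) (at 0)"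
    using D unfolding has_field_derivative_iff D0 A0 by simp
qed

lemma c4_cont:
  assumes \<tau>: "Im \<tau> > 0"
  shows "isCont (c4 \<tau>) 0" "c4 \<tau> 0 = 0"
proof -
  obtain \<delta> where d: "\<delta> > 0" "\<And>p v. p \<in> UNIV - {(0,0)} \<Longrightarrow> v \<in> ball 0 \<delta> \<Longrightarrow> v \<noteq> latt \<tau> p"
    using ball_notlatt[OF \<tau>] by blast
  define h where "h p v = -2 / (v - latt \<tau> p)^3" for p v
  define h' where "h' p v = - of_nat 3 * (-2) / (v - latt \<tau> p)^(Suc 3)" for p v
  have der: "(h p has_field_derivative h' p v) (at v)" if "p \<in> UNIV - {(0,0)}" "v \<in> ball 0 \<delta>" for p v
    unfolding h_def h'_def by (rule deriv_inv_pow) (use d that in auto)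
  have bnd: "\<exists>K T. \<forall>p\<in>UNIV - {(0,0)}. \<forall>v. norm v \<le> R \<longrightarrow> T \<le> norm (latt \<tau> p) \<longrightarrow>
                   norm (h p v) \<le> K / norm (latt \<tau> p) ^ 3" for R
  proof (rule exI[of _ "16"], rule exI[of _ "2 * R + 1"], intro ballI allI impI)
    fix p and v :: complex assume "norm v \<le> R" "2 * R + 1 \<le> norm (latt \<tau> p)"
    from bound_h3[OF this, of "-2" 3] show "norm (h p v) \<le> 16 / norm (latt \<tau> p) ^ 3"
      by (simp add: h_def)
  qed
  have z0: "0 \<in> ball (0::complex) \<delta>" using d(1) by simp
  note L = latt_series_deriv[OF \<tau> open_ball z0 der bnd]
  have "c4 \<tau> = (\<lambda>v. \<Sum>\<^sub>\<infinity>p\<in>UNIV - {(0,0)}. h p v)" by (simp add: c4_def h_def fun_eq_iff)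
  then show "isCont (c4 \<tau>) 0" using L(3) DERIV_isCont by auto
  show "c4 \<tau> 0 = 0" unfolding c4_def
    by (rule odd_sum_zero) (simp add: latt_negp power3_eq_cube)
qed

lemma c3_cont:
  assumes \<tau>: "Im \<tau> > 0" and b: "b \<notin> LL \<tau>"
  shows "isCont (c3 \<tau> b) b"
proof -
  define h where "h p v = (1 / (b - latt \<tau> p)^2) / (v - latt \<tau> p)^1" for p v
  define h' where "h' p v = - of_nat 1 * (1 / (b - latt \<tau> p)^2) / (v - latt \<tau> p)^(Suc 1)" for p v
  have der: "(h p has_field_derivative h' p v) (at v)" if "p \<in> UNIV - {(0,0)}" "v \<in> - LL \<tau>" for p v
    unfolding h_def h'_def by (rule deriv_inv_pow) (use that notLL in auto)
  have bnd: "\<exists>K T. \<forall>p\<in>UNIV - {(0,0)}. \<forall>v. norm v \<le> R \<longrightarrow> T \<le> norm (latt \<tau> p) \<longrightarrow>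
                   norm (h p v) \<le> K / norm (latt \<tau> p) ^ 3" for R
  proof (rule exI[of _ "8"], rule exI[of _ "2 * max R (norm b) + 1"], intro ballI allI impI)
    fix p and v :: complex assume a: "norm v \<le> R" "2 * max R (norm b) + 1 \<le> norm (latt \<tau> p)"
    have a': "norm v \<le> max R (norm b)" using a(1) by simp
    have w0: "norm (latt \<tau> p) > 0" using a(2) by (smt (verit) norm_ge_zero)
    have fb: "norm (latt \<tau> p) / 2 \<le> norm (b - latt \<tau> p)" by (rule far[of _ "max R (norm b)"]) (use a in auto)
    have nc: "norm (1 / (b - latt \<tau> p)^2) \<le> 4 / norm (latt \<tau> p)^2"
    proof -
      have "norm (1 / (b - latt \<tau> p)^2) \<le> 1 / (norm (latt \<tau> p) / 2)^2"
        by (rule quot_bound) (use fb w0 in \<open>auto simp: norm_power power_mono\<close>)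
      also have "\<dots> = 4 / norm (latt \<tau> p)^2" by (simp add: power_divide)
      finally show ?thesis .
    qed
    from bound_h3[OF a' a(2), of "1 / (b - latt \<tau> p)^2" 1]
    have "norm (h p v) \<le> norm (1 / (b - latt \<tau> p)^2) * 2 / norm (latt \<tau> p)" by (simp add: h_def)
    also have "\<dots> \<le> (4 / norm (latt \<tau> p)^2) * 2 / norm (latt \<tau> p)"
      by (intro divide_right_mono mult_right_mono nc) auto
    also have "\<dots> = 8 / norm (latt \<tau> p) ^ 3" using w0 by (simp add: field_simps power3_eq_cube power2_eq_square)
    finally show "norm (h p v) \<le> 8 / norm (latt \<tau> p) ^ 3" .
  qed
  have b': "b \<in> - LL \<tau>" using b by simp
  note L = latt_series_deriv[OF \<tau> LL_open[OF \<tau>] b' der bnd]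
  have "c3 \<tau> b = (\<lambda>v. \<Sum>\<^sub>\<infinity>p\<in>UNIV - {(0,0)}. h p v)" by (simp add: c3_def h_def fun_eq_iff)
  then show "isCont (c3 \<tau> b) b" using L(3) DERIV_isCont by auto
qed



lemma id1:
  fixes z w :: complex
  assumes "w \<noteq> 0" "z \<noteq> w"
  shows "1 / (z - w) + 1 / w + z / w^2 = z^2 * ((1 / w^2) / (z - w))"
proof -
  have "z - w \<noteq> 0" using assms by simp
  then show ?thesis using assms by (simp add: divide_simps) (simp add: algebra_simps power2_eq_square)
qed

lemma id3:
  fixes a b w :: complex
  assumes "w \<noteq> 0" "b \<noteq> w" "a + b \<noteq> w"
  shows "(1 / (a + b - w) + 1 / w + (a + b) / w^2) + - (1 / (b - w) + 1 / w + b / w^2)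
          + a * (1 / (b - w)^2 - 1 / w^2) = a^2 * ((1 / (b - w)^2) / (a + b - w))"
proof -
  have "b - w \<noteq> 0" "a + b - w \<noteq> 0" using assms by auto
  then show ?thesis using assms by (simp add: divide_simps) (simp add: algebra_simps power2_eq_square)
qed

lemma id0:
  fixes a b :: complex
  assumes "b \<noteq> 0" "a + b \<noteq> 0"
  shows "1 / (a + b) - 1 / b + a / b^2 = a^2 / (b^2 * (a + b))"
  using assms by (simp add: divide_simps) (simp add: algebra_simps power2_eq_square)

lemma latt_nz:
  assumes "Im \<tau> > 0" "p \<noteq> (0,0)"
  shows "latt \<tau> p \<noteq> 0"
proof -
  obtain \<delta> where d: "\<delta> > 0" "\<And>p. p \<noteq> (0,0) \<Longrightarrow> \<delta> \<le> norm (latt \<tau> p)"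
    using latt_nonzero_lower[OF assms(1)] by blast
  have "\<delta> \<le> norm (latt \<tau> p)" using assms(2) by (rule d(2))
  then have "norm (latt \<tau> p) > 0" using d(1) by linarith
  then show ?thesis by auto
qed

lemma zetaW_c1:
  assumes \<tau>: "Im \<tau> > 0" and z: "z \<notin> LL \<tau>"
  shows "zetaW \<tau> z = 1 / z + z^2 * c1 \<tau> z"
proof -
  have "(\<Sum>\<^sub>\<infinity>p\<in>UNIV - {(0,0)}. 1 / (z - latt \<tau> p) + 1 / latt \<tau> p + z / (latt \<tau> p)^2)
      = (\<Sum>\<^sub>\<infinity>p\<in>UNIV - {(0,0)}. z^2 * ((1 / (latt \<tau> p)^2) / (z - latt \<tau> p)))"
  proof (rule infsum_cong)
    fix p assume "p \<in> UNIV - {(0::int,0::int)}"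
    then have "latt \<tau> p \<noteq> 0" "z \<noteq> latt \<tau> p"
      using notLL[OF z] latt_nz[OF \<tau>] by auto
    then show "1 / (z - latt \<tau> p) + 1 / latt \<tau> p + z / (latt \<tau> p)^2 = z^2 * ((1 / (latt \<tau> p)^2) / (z - latt \<tau> p))"
      by (rule id1)
  qed
  also have "\<dots> = z^2 * c1 \<tau> z" unfolding c1_def by (rule infsum_cmult_right')
  finally show ?thesis by (simp add: zetaW_def)
qed

lemma Qf_c4:
  assumes \<tau>: "Im \<tau> > 0" and z: "z \<notin> LL \<tau>"
  shows "Qf \<tau> z = -2 / z^3 + c4 \<tau> z"
proof -
  have "Qf \<tau> z = (\<Sum>\<^sub>\<infinity>p\<in>insert (0,0) (UNIV - {(0,0)}). -2 / (z - latt \<tau> p)^3)"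
    unfolding Qf_def by (subst UNIV_insert0[symmetric]) simp
  also have "\<dots> = -2 / (z - latt \<tau> (0,0))^3 + (\<Sum>\<^sub>\<infinity>p\<in>UNIV - {(0,0)}. -2 / (z - latt \<tau> p)^3)"
    by (rule infsum_insert) (use wpW_deriv(3)[OF \<tau> z] in auto)
  finally show ?thesis by (simp add: c4_def)
qed

lemma zeta_c3:
  assumes \<tau>: "Im \<tau> > 0" and b: "b \<notin> LL \<tau>" and ab: "a + b \<notin> LL \<tau>"
  shows "zetaW \<tau> (a + b) - zetaW \<tau> b + wpW \<tau> b * a = a^2 * (1 / (b^2 * (a + b)) + c3 \<tau> b (a + b))"
proof -
  define h2 where "h2 z p = 1 / (z - latt \<tau> p) + 1 / latt \<tau> p + z / (latt \<tau> p)^2" for z p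
  define h1 where "h1 z p = 1 / (z - latt \<tau> p)^2 - 1 / (latt \<tau> p)^2" for z p
  let ?I = "UNIV - {(0::int,0::int)}"
  have s1: "(h2 (a + b) has_sum infsum (h2 (a + b)) ?I) ?I"
    using has_sum_infsum[OF zetaW_deriv(2)[OF \<tau> ab]] by (simp add: h2_def[abs_def])
  have s2: "(h2 b has_sum infsum (h2 b) ?I) ?I"
    using has_sum_infsum[OF zetaW_deriv(2)[OF \<tau> b]] by (simp add: h2_def[abs_def])
  have s3: "(h1 b has_sum infsum (h1 b) ?I) ?I"
    using has_sum_infsum[OF wpW_deriv(2)[OF \<tau> b]] by (simp add: h1_def[abs_def])
  have s2': "((\<lambda>p. - h2 b p) has_sum - infsum (h2 b) ?I) ?I"
    using s2 by (simp add: has_sum_uminus)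
  have H: "((\<lambda>p. h2 (a + b) p + - h2 b p + a * h1 b p) has_sum
        (infsum (h2 (a + b)) ?I + - infsum (h2 b) ?I + a * infsum (h1 b) ?I)) ?I"
    by (intro has_sum_add s1 s2' has_sum_cmult_right s3)
  have E: "h2 (a + b) p + - h2 b p + a * h1 b p = a^2 * ((1 / (b - latt \<tau> p)^2) / (a + b - latt \<tau> p))"
    if "p \<in> ?I" for p
  proof -
    have "latt \<tau> p \<noteq> 0" "b \<noteq> latt \<tau> p" "a + b \<noteq> latt \<tau> p"
      using that latt_nz[OF \<tau>] notLL[OF b] notLL[OF ab] by auto
    then show ?thesis unfolding h1_def h2_def by (rule id3)
  qed
  have "((\<lambda>p. a^2 * ((1 / (b - latt \<tau> p)^2) / (a + b - latt \<tau> p))) has_sum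
        (infsum (h2 (a + b)) ?I + - infsum (h2 b) ?I + a * infsum (h1 b) ?I)) ?I"
    using H has_sum_cong[of ?I "\<lambda>p. h2 (a + b) p + - h2 b p + a * h1 b p"
        "\<lambda>p. a^2 * ((1 / (b - latt \<tau> p)^2) / (a + b - latt \<tau> p))"] E by blast
  then have "infsum (h2 (a + b)) ?I + - infsum (h2 b) ?I + a * infsum (h1 b) ?I
      = (\<Sum>\<^sub>\<infinity>p\<in>?I. a^2 * ((1 / (b - latt \<tau> p)^2) / (a + b - latt \<tau> p)))"
    by (simp add: infsumI)
  also have "\<dots> = a^2 * c3 \<tau> b (a + b)" unfolding c3_def by (rule infsum_cmult_right')
  finally have S: "infsum (h2 (a + b)) ?I + - infsum (h2 b) ?I + a * infsum (h1 b) ?I = a^2 * c3 \<tau> b (a + b)" .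
  have b0: "b \<noteq> 0" and ab0: "a + b \<noteq> 0" using notLL0 b ab by auto
  have "zetaW \<tau> (a + b) - zetaW \<tau> b + wpW \<tau> b * a
      = (1 / (a + b) - 1 / b + a / b^2) + (infsum (h2 (a + b)) ?I + - infsum (h2 b) ?I + a * infsum (h1 b) ?I)"
  proof -
    have z1: "zetaW \<tau> (a + b) = 1 / (a + b) + infsum (h2 (a + b)) ?I"
      unfolding zetaW_def h2_def[abs_def] by simp
    have z2: "zetaW \<tau> b = 1 / b + infsum (h2 b) ?I"
      unfolding zetaW_def h2_def[abs_def] by simp
    have w1: "wpW \<tau> b = 1 / b^2 + infsum (h1 b) ?I"
      unfolding wpW_def h1_def[abs_def] by simp
    show ?thesis unfolding z1 z2 w1 by (simp add: algebra_simps)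
  qed
  also have "\<dots> = a^2 / (b^2 * (a + b)) + a^2 * c3 \<tau> b (a + b)" using id0[OF b0 ab0] S by simp
  also have "\<dots> = a^2 * (1 / (b^2 * (a + b)) + c3 \<tau> b (a + b))" by (simp add: algebra_simps)
  finally show ?thesis .
qed



definition PP :: "complex \<Rightarrow> complex \<Rightarrow> complex set" where
  "PP \<tau> b = {a. a \<in> LL \<tau> \<or> a + b \<in> LL \<tau>}"

definition fF :: "complex \<Rightarrow> complex \<Rightarrow> complex \<Rightarrow> complex" where
  "fF \<tau> b a = (wpW \<tau> a - wpW \<tau> b) * (zetaW \<tau> (a + b) - zetaW \<tau> a - zetaW \<tau> b) - (Qf \<tau> a - Qf \<tau> b) / 2"

lemma PP_shift: "a + latt \<tau> q \<in> PP \<tau> b \<longleftrightarrow> a \<in> PP \<tau> b"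
proof -
  have e: "a + latt \<tau> q + b = (a + b) + latt \<tau> q" by (simp add: algebra_simps)
  show ?thesis by (simp only: PP_def mem_Collect_eq e LL_shift)
qed

lemma PP_finite:
  assumes \<tau>: "Im \<tau> > 0"
  shows "finite (PP \<tau> b \<inter> cball c r)"
proof -
  define A where "A = {p. norm (latt \<tau> p) \<le> norm c + r}"
  define B where "B = {p. norm (latt \<tau> p) \<le> norm c + r + norm b}"
  have "PP \<tau> b \<inter> cball c r \<subseteq> latt \<tau> ` A \<union> (\<lambda>p. latt \<tau> p - b) ` B"
  proof
    fix a assume a: "a \<in> PP \<tau> b \<inter> cball c r"
    have na: "norm a \<le> norm c + r"
      using a norm_triangle_ineq2[of a c] by (auto simp: dist_norm norm_minus_commute)
    show "a \<in> latt \<tau> ` A \<union> (\<lambda>p. latt \<tau> p - b) ` B"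
    proof (cases "a \<in> LL \<tau>")
      case True
      then obtain p where "a = latt \<tau> p" by (auto simp: LL_def)
      then show ?thesis using na by (auto simp: A_def)
    next
      case False
      then have "a + b \<in> LL \<tau>" using a by (auto simp: PP_def)
      then obtain p where p: "a + b = latt \<tau> p" by (auto simp: LL_def)
      have "norm (latt \<tau> p) \<le> norm a + norm b" unfolding p[symmetric] by (rule norm_triangle_ineq)
      then have "p \<in> B" using na by (auto simp: B_def)
      moreover have "a = latt \<tau> p - b" using p by (simp add: algebra_simps)
      ultimately show ?thesis by blast
    qed
  qed
  moreover have "finite A" "finite B" unfolding A_def B_def by (rule latt_finite[OF \<tau>])+
  ultimately show ?thesis by (meson finite_Un finite_imageI finite_subset)
qed

lemma PP_ev:
  assumes \<tau>: "Im \<tau> > 0"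
  shows "eventually (\<lambda>x. x \<notin> PP \<tau> b) (at c)"
proof -
  have "\<not> c islimpt (PP \<tau> b \<inter> cball c 1)" by (rule islimpt_finite[OF PP_finite[OF \<tau>]])
  then have e1: "eventually (\<lambda>x. x \<notin> PP \<tau> b \<inter> cball c 1) (at c)" by (simp add: islimpt_iff_eventually)
  have e2: "eventually (\<lambda>x. x \<in> ball c 1) (at c)" by (rule eventually_at_in_open') auto
  show ?thesis using e1 e2 by eventually_elim auto
qed

lemma fF_period:
  assumes \<tau>: "Im \<tau> > 0" and h: "- latt \<tau> q / 2 \<notin> LL \<tau>" and a: "a \<notin> PP \<tau> b"
  shows "fF \<tau> b (a + latt \<tau> q) = fF \<tau> b a"
proof -
  have a1: "a \<notin> LL \<tau>" "a + b \<notin> LL \<tau>" using a by (auto simp: PP_def)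
  obtain \<eta> where eta: "\<And>z. z \<notin> LL \<tau> \<Longrightarrow> zetaW \<tau> (z + latt \<tau> q) = zetaW \<tau> z + \<eta>"
    using zetaW_quasi[OF \<tau> h] by blast
  have e: "a + latt \<tau> q + b = (a + b) + latt \<tau> q" by (simp add: algebra_simps)
  have z1: "zetaW \<tau> (a + latt \<tau> q + b) = zetaW \<tau> (a + b) + \<eta>" unfolding e by (rule eta[OF a1(2)])
  show ?thesis unfolding fF_def
    using wpW_period[OF \<tau> h a1(1)] eta[OF a1(1)] z1 Qf_periodic[of \<tau> a q] by simp
qed

lemma int_shift:
  fixes F :: "complex \<Rightarrow> complex"
  assumes inv: "\<And>a. a + d \<in> S \<longleftrightarrow> a \<in> S" and per: "\<And>a. a \<notin> S \<Longrightarrow> F (a + d) = F a"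
    and a: "a \<notin> S"
  shows "a + of_int k * d \<notin> S \<and> F (a + of_int k * d) = F a"
proof (induction k rule: int_induct[where k=0])
  case base then show ?case using a by simp
next
  case (step1 i)
  have e: "a + of_int (i + 1) * d = (a + of_int i * d) + d" by (simp add: algebra_simps)
  show ?case unfolding e using step1(2) inv per by auto
next
  case (step2 i)
  have e: "a + of_int i * d = (a + of_int (i - 1) * d) + d" by (simp add: algebra_simps)
  have "a + of_int (i - 1) * d \<notin> S" using step2(2) inv[of "a + of_int (i - 1) * d"] e by simp
  then show ?case using step2(2) per[of "a + of_int (i - 1) * d"] e by simp
qed

lemma fF_period_all:
  assumes \<tau>: "Im \<tau> > 0" and a: "a \<notin> PP \<tau> b"
  shows "fF \<tau> b (a + latt \<tau> q) = fF \<tau> b a"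
proof -
  obtain m n where q: "q = (m, n)" by (cases q)
  have inv1: "\<And>a. a + latt \<tau> (1,0) \<in> PP \<tau> b \<longleftrightarrow> a \<in> PP \<tau> b" by (rule PP_shift)
  have inv2: "\<And>a. a + latt \<tau> (0,1) \<in> PP \<tau> b \<longleftrightarrow> a \<in> PP \<tau> b" by (rule PP_shift)
  have per1: "\<And>a. a \<notin> PP \<tau> b \<Longrightarrow> fF \<tau> b (a + latt \<tau> (1,0)) = fF \<tau> b a"
    by (rule fF_period[OF \<tau> not_half(1)[OF \<tau>]])
  have per2: "\<And>a. a \<notin> PP \<tau> b \<Longrightarrow> fF \<tau> b (a + latt \<tau> (0,1)) = fF \<tau> b a"
    by (rule fF_period[OF \<tau> not_half(2)[OF \<tau>]])
  note s1 = int_shift[where F="fF \<tau> b" and S="PP \<tau> b" and d="latt \<tau> (1,0)", OF inv1 per1 a, of m]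
  note s2 = int_shift[where F="fF \<tau> b" and S="PP \<tau> b" and d="latt \<tau> (0,1)", OF inv2 per2 s1[THEN conjunct1], of n]
  have "a + latt \<tau> q = a + of_int m * latt \<tau> (1,0) + of_int n * latt \<tau> (0,1)"
    by (simp add: q latt_def)
  then show ?thesis using s1 s2 by (simp add: add.assoc)
qed



lemma Qf_c3:
  assumes \<tau>: "Im \<tau> > 0" and b: "b \<notin> LL \<tau>"
  shows "Qf \<tau> b = -2 * (1 / b^3 + c3 \<tau> b b)"
proof -
  have "c4 \<tau> b = (\<Sum>\<^sub>\<infinity>p\<in>UNIV - {(0,0)}. -2 * ((1 / (b - latt \<tau> p)^2) / (b - latt \<tau> p)))"
    unfolding c4_def by (rule infsum_cong) (simp add: power3_eq_cube power2_eq_square)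
  also have "\<dots> = -2 * c3 \<tau> b b" unfolding c3_def by (rule infsum_cmult_right')
  finally show ?thesis using Qf_c4[OF \<tau> b] by (simp add: algebra_simps)
qed

lemma alg0:
  fixes a A W Zb C3 c1 c4 Qb :: complex
  assumes "a \<noteq> 0"
  shows "(1 / a^2 + A - W) * ((Zb - W * a + a^2 * C3) - (1 / a + a^2 * c1) - Zb) - ((-2 / a^3 + c4) - Qb) / 2
       = (C3 - c1) + (A - W) * a^2 * (C3 - c1) - (A - W) * W * a - A / a - c4 / 2 + Qb / 2"
  using assms by (simp add: field_simps) (simp add: algebra_simps power2_eq_square power3_eq_cube eval_nat_numeral)

lemma lim0:
  assumes \<tau>: "Im \<tau> > 0" and b: "b \<notin> LL \<tau>"
  shows "(fF \<tau> b \<longlongrightarrow> 0) (at 0)"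
proof -
  define W where "W = wpW \<tau> b"
  define Zb where "Zb = zetaW \<tau> b"
  define Qb where "Qb = Qf \<tau> b"
  define C3 where "C3 a = 1 / (b^2 * (a + b)) + c3 \<tau> b (a + b)" for a
  define Aq where "Aq a = Af \<tau> a / a" for a
  define E where "E a = (C3 a - c1 \<tau> a) + (Af \<tau> a - W) * a^2 * (C3 a - c1 \<tau> a) - (Af \<tau> a - W) * W * a
      - Aq a - c4 \<tau> a / 2 + Qb / 2" for a
  have b0: "b \<noteq> 0" using notLL0[OF b] .
  have ev: "eventually (\<lambda>a. a \<notin> PP \<tau> b \<and> a \<noteq> 0) (at 0)"
  proof -
    have e1: "eventually (\<lambda>x. x \<notin> PP \<tau> b) (at 0)" by (rule PP_ev[OF \<tau>])
    have e2: "eventually (\<lambda>y. y \<in> UNIV - {0}) (at (0::complex))" by (rule eventually_at_in_open) auto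
    show ?thesis using e1 e2 by eventually_elim auto
  qed
  have eq: "fF \<tau> b a = E a" if "a \<notin> PP \<tau> b \<and> a \<noteq> 0" for a
  proof -
    have a: "a \<notin> LL \<tau>" "a + b \<notin> LL \<tau>" "a \<noteq> 0" using that by (auto simp: PP_def)
    have z3: "zetaW \<tau> (a + b) = Zb - W * a + a^2 * C3 a"
      using zeta_c3[OF \<tau> b a(2)] by (simp add: Zb_def W_def C3_def algebra_simps)
    have "fF \<tau> b a = (1 / a^2 + Af \<tau> a - W) * ((Zb - W * a + a^2 * C3 a) - (1 / a + a^2 * c1 \<tau> a) - Zb)
        - ((-2 / a^3 + c4 \<tau> a) - Qb) / 2"
      unfolding fF_def z3 wpW_Af zetaW_c1[OF \<tau> a(1)] Qf_c4[OF \<tau> a(1)]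
      by (simp add: W_def Zb_def Qb_def wpW_Af)
    also have "\<dots> = E a" unfolding E_def Aq_def by (rule alg0[OF a(3)])
    finally show ?thesis .
  qed
  have cC3: "isCont C3 0"
  proof -
    have "isCont (\<lambda>a. 1 / (b^2 * (a + b))) 0" using b0 by (intro continuous_intros) auto
    moreover have "isCont (\<lambda>a. c3 \<tau> b (a + b)) 0"
    proof (rule isCont_o2[where f="\<lambda>a. a + b"])
      show "isCont (\<lambda>a. a + b) 0" by (intro continuous_intros)
      show "isCont (c3 \<tau> b) (0 + b)" using c3_cont[OF \<tau> b] by simp
    qed
    ultimately show ?thesis unfolding C3_def by (rule isCont_add)
  qed
  have t1: "(C3 \<longlongrightarrow> C3 0) (at 0)" using cC3 by (simp add: isCont_def)
  have t2: "(c1 \<tau> \<longlongrightarrow> 0) (at 0)" using c1_cont[OF \<tau>] by (simp add: isCont_def)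
  have t3: "(Af \<tau> \<longlongrightarrow> 0) (at 0)" using Af_lim(2,3)[OF \<tau>] by (simp add: isCont_def)
  have t4: "(Aq \<longlongrightarrow> 0) (at 0)" using Af_lim(1)[OF \<tau>] by (simp add: Aq_def[abs_def])
  have t5: "(c4 \<tau> \<longlongrightarrow> 0) (at 0)" using c4_cont[OF \<tau>] by (simp add: isCont_def)
  have "(E \<longlongrightarrow> (C3 0 - 0) + (0 - W) * 0^2 * (C3 0 - 0) - (0 - W) * W * 0 - 0 - 0 / 2 + Qb / 2) (at 0)"
    unfolding E_def[abs_def]
    by (intro tendsto_intros t1 t2 t3 t4 t5) auto
  moreover have "(C3 0 - 0) + (0 - W) * 0^2 * (C3 0 - 0) - (0 - W) * W * 0 - 0 - 0 / 2 + Qb / 2 = (0::complex)"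
    using Qf_c3[OF \<tau> b] b0 by (simp add: C3_def Qb_def power3_eq_cube power2_eq_square power_zero_numeral) (simp add: field_simps)
  ultimately have "(E \<longlongrightarrow> 0) (at 0)" by simp
  then show ?thesis
    by (rule Lim_transform_eventually) (use ev eq in \<open>auto elim: eventually_mono\<close>)
qed

lemma limb:
  assumes \<tau>: "Im \<tau> > 0" and b: "b \<notin> LL \<tau>"
  shows "\<exists>l. (fF \<tau> b \<longlongrightarrow> l) (at (- b))"
proof -
  have mb: "- b \<notin> LL \<tau>" using b LL_neg by auto
  define DQ where "DQ x = (wpW \<tau> x - wpW \<tau> (- b)) / (x - - b)" for x
  define E where "E x = DQ x + (wpW \<tau> x - wpW \<tau> (- b)) * ((x + b)^2 * c1 \<tau> (x + b) - zetaW \<tau> x - zetaW \<tau> b)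
      - (Qf \<tau> x - Qf \<tau> b) / 2" for x
  have eq: "fF \<tau> b x = E x" if "x \<notin> PP \<tau> b" for x
  proof -
    have x: "x \<notin> LL \<tau>" "x + b \<notin> LL \<tau>" using that by (auto simp: PP_def)
    have xb: "x + b \<noteq> 0" using notLL0[OF x(2)] .
    have "fF \<tau> b x = (wpW \<tau> x - wpW \<tau> (- b)) * ((1 / (x + b) + (x + b)^2 * c1 \<tau> (x + b)) - zetaW \<tau> x - zetaW \<tau> b)
        - (Qf \<tau> x - Qf \<tau> b) / 2"
      unfolding fF_def zetaW_c1[OF \<tau> x(2)] wpW_even by simp
    also have "\<dots> = E x" unfolding E_def DQ_def by (simp add: algebra_simps diff_divide_distrib)
    finally show ?thesis .
  qed
  have t1: "(DQ \<longlongrightarrow> Qf \<tau> (- b)) (at (- b))"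
    using wpW_deriv(1)[OF \<tau> mb] unfolding has_field_derivative_iff DQ_def[abs_def] .
  have t2: "(wpW \<tau> \<longlongrightarrow> wpW \<tau> (- b)) (at (- b))" using wpW_isCont[OF \<tau> mb] by (simp add: isCont_def)
  have t3: "(zetaW \<tau> \<longlongrightarrow> zetaW \<tau> (- b)) (at (- b))" using zetaW_isCont[OF \<tau> mb] by (simp add: isCont_def)
  have t4: "(Qf \<tau> \<longlongrightarrow> Qf \<tau> (- b)) (at (- b))" using Qf_isCont[OF \<tau> mb] by (simp add: isCont_def)
  have t5: "((\<lambda>x. c1 \<tau> (x + b)) \<longlongrightarrow> c1 \<tau> 0) (at (- b))"
  proof -
    have "(c1 \<tau> \<longlongrightarrow> c1 \<tau> 0) (at 0)" using c1_cont(1)[OF \<tau>] by (simp add: isCont_def)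
    from LIM_offset[OF this, of b] show ?thesis by simp
  qed
  have "(E \<longlongrightarrow> Qf \<tau> (- b) + (wpW \<tau> (- b) - wpW \<tau> (- b)) * ((- b + b)^2 * c1 \<tau> 0 - zetaW \<tau> (- b) - zetaW \<tau> b)
      - (Qf \<tau> (- b) - Qf \<tau> b) / 2) (at (- b))"
    unfolding E_def[abs_def] by (intro tendsto_intros t1 t2 t3 t4 t5) auto
  then have "(fF \<tau> b \<longlongrightarrow> Qf \<tau> (- b) + (wpW \<tau> (- b) - wpW \<tau> (- b)) * ((- b + b)^2 * c1 \<tau> 0 - zetaW \<tau> (- b) - zetaW \<tau> b)
      - (Qf \<tau> (- b) - Qf \<tau> b) / 2) (at (- b))"
  proof (rule Lim_transform_eventually)
    have e1: "eventually (\<lambda>x. x \<notin> PP \<tau> b) (at (- b))" by (rule PP_ev[OF \<tau>])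
    then show "\<forall>\<^sub>F x in at (- b). E x = fF \<tau> b x" using eq by (auto elim: eventually_mono)
  qed
  then show ?thesis by blast
qed



lemma fF_deriv:
  assumes \<tau>: "Im \<tau> > 0" and b: "b \<notin> LL \<tau>" and c: "c \<notin> PP \<tau> b"
  shows "\<exists>D. (fF \<tau> b has_field_derivative D) (at c)"
proof -
  have c1: "c \<notin> LL \<tau>" "c + b \<notin> LL \<tau>" using c by (auto simp: PP_def)
  obtain DQ where DQ: "(Qf \<tau> has_field_derivative DQ) (at c)" using Qf_deriv[OF \<tau> c1(1)] by blast
  have dz: "((\<lambda>a. zetaW \<tau> (a + b)) has_field_derivative - wpW \<tau> (c + b)) (at c)"
    by (rule DERIV_shift[THEN iffD1]) (rule zetaW_deriv(1)[OF \<tau> c1(2)])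
  have "(fF \<tau> b has_field_derivative
      (Qf \<tau> c - 0) * (zetaW \<tau> (c + b) - zetaW \<tau> c - zetaW \<tau> b) +
      (- wpW \<tau> (c + b) - - wpW \<tau> c - 0) * (wpW \<tau> c - wpW \<tau> b) - (DQ - 0) / 2) (at c)"
    unfolding fF_def[abs_def]
    by (intro DERIV_diff DERIV_mult DERIV_cdivide DERIV_const wpW_deriv(1)[OF \<tau> c1(1)]
        zetaW_deriv(1)[OF \<tau> c1(1)] dz DQ)
  then show ?thesis by blast
qed

lemma fF_lim_all:
  assumes \<tau>: "Im \<tau> > 0" and b: "b \<notin> LL \<tau>"
  shows "\<exists>l. (fF \<tau> b \<longlongrightarrow> l) (at c)"
proof -
  have shiftlim: "(fF \<tau> b \<longlongrightarrow> l) (at (c0 + latt \<tau> q))" if "(fF \<tau> b \<longlongrightarrow> l) (at c0)" for c0 l q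
  proof -
    have "((\<lambda>x. fF \<tau> b (x + - latt \<tau> q)) \<longlongrightarrow> l) (at (c0 - - latt \<tau> q))"
      by (rule LIM_offset[OF that])
    then have t: "((\<lambda>x. fF \<tau> b (x - latt \<tau> q)) \<longlongrightarrow> l) (at (c0 + latt \<tau> q))" by simp
    have ev: "eventually (\<lambda>x. x \<notin> PP \<tau> b) (at (c0 + latt \<tau> q))" by (rule PP_ev[OF \<tau>])
    have "fF \<tau> b (x - latt \<tau> q) = fF \<tau> b x" if "x \<notin> PP \<tau> b" for x
    proof -
      have "x - latt \<tau> q \<notin> PP \<tau> b" using that PP_shift[of "x - latt \<tau> q" \<tau> q b] by simp
      from fF_period_all[OF \<tau> this, of q] show ?thesis by simp
    qed
    with ev have "eventually (\<lambda>x. fF \<tau> b (x - latt \<tau> q) = fF \<tau> b x) (at (c0 + latt \<tau> q))"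
      by (auto elim: eventually_mono)
    from Lim_transform_eventually[OF t this] show ?thesis .
  qed
  show ?thesis
  proof (cases "c \<in> PP \<tau> b")
    case False
    then obtain D where "(fF \<tau> b has_field_derivative D) (at c)" using fF_deriv[OF \<tau> b] by blast
    then have "isCont (fF \<tau> b) c" by (rule DERIV_isCont)
    then show ?thesis by (auto simp: isCont_def)
  next
    case True
    then show ?thesis
    proof (cases "c \<in> LL \<tau>")
      case True
      then obtain q where q: "c = latt \<tau> q" by (auto simp: LL_def)
      have "(fF \<tau> b \<longlongrightarrow> 0) (at (0 + latt \<tau> q))" by (rule shiftlim[OF lim0[OF \<tau> b]])
      then show ?thesis using q by auto
    next
      case False
      then have "c + b \<in> LL \<tau>" using True by (auto simp: PP_def)
      then obtain q where q: "c + b = latt \<tau> q" by (auto simp: LL_def)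
      obtain l where l: "(fF \<tau> b \<longlongrightarrow> l) (at (- b))" using limb[OF \<tau> b] by blast
      have "(fF \<tau> b \<longlongrightarrow> l) (at (- b + latt \<tau> q))" by (rule shiftlim[OF l])
      moreover have "- b + latt \<tau> q = c" using q by (simp add: algebra_simps)
      ultimately show ?thesis by auto
    qed
  qed
qed



lemma fF_zero:
  assumes \<tau>: "Im \<tau> > 0" and b: "b \<notin> LL \<tau>" and a: "a \<notin> PP \<tau> b"
  shows "fF \<tau> b a = 0"
proof -
  define f where "f = fF \<tau> b"
  define g where "g c = Lim (at c) f" for c
  have T: "(f \<longlongrightarrow> g c) (at c)" for c
  proof -
    obtain l where l: "(f \<longlongrightarrow> l) (at c)" using fF_lim_all[OF \<tau> b] unfolding f_def by blast
    then have "g c = l" unfolding g_def by (intro tendsto_Lim) auto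
    then show ?thesis using l by simp
  qed
  have ev: "eventually (\<lambda>x. x \<notin> PP \<tau> b) (at c)" for c by (rule PP_ev[OF \<tau>])
  have gf: "g c = f c" if cP: "c \<notin> PP \<tau> b" for c
  proof -
    obtain D where "(f has_field_derivative D) (at c)" using fF_deriv[OF \<tau> b cP] unfolding f_def by blast
    then have "(f \<longlongrightarrow> f c) (at c)" using DERIV_isCont isCont_def by blast
    then show ?thesis using T[of c] tendsto_unique[OF at_neq_bot] by blast
  qed
  have contg: "isCont g c" for c
  proof -
    have "eventually (\<lambda>x. f x = g x) (at c)" using ev[of c] gf by (auto elim: eventually_mono)
    then have "(g \<longlongrightarrow> g c) (at c)" by (rule Lim_transform_eventually[OF T])
    then show ?thesis by (simp add: isCont_def)
  qed
  have contg_on: "continuous_on S g" for S by (intro continuous_at_imp_continuous_on ballI contg)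
  have gper: "g (c + latt \<tau> q) = g c" for c q
  proof -
    have "((\<lambda>x. f (x + - latt \<tau> q)) \<longlongrightarrow> g c) (at (c - - latt \<tau> q))"
      by (rule LIM_offset[OF T])
    then have t: "((\<lambda>x. f (x - latt \<tau> q)) \<longlongrightarrow> g c) (at (c + latt \<tau> q))" by simp
    have "f (x - latt \<tau> q) = f x" if "x \<notin> PP \<tau> b" for x
    proof -
      have "x - latt \<tau> q \<notin> PP \<tau> b" using that PP_shift[of "x - latt \<tau> q" \<tau> q b] by simp
      from fF_period_all[OF \<tau> this, of q] show ?thesis by (simp add: f_def)
    qed
    with ev[of "c + latt \<tau> q"] have "eventually (\<lambda>x. f (x - latt \<tau> q) = f x) (at (c + latt \<tau> q))"
      by (auto elim: eventually_mono)
    from Lim_transform_eventually[OF t this] have "(f \<longlongrightarrow> g c) (at (c + latt \<tau> q))" .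
    then show ?thesis using T[of "c + latt \<tau> q"] tendsto_unique[OF at_neq_bot] by blast
  qed
  have holball: "g holomorphic_on ball 0 R" for R
  proof -
    define K where "K = PP \<tau> b \<inter> cball 0 R"
    have finK: "finite K" unfolding K_def by (rule PP_finite[OF \<tau>])
    have "g holomorphic_on (ball 0 R - K)"
    proof -
      have opn: "open (ball 0 R - K)" using finK by (simp add: open_Diff finite_imp_closed)
      have "\<exists>D. (g has_field_derivative D) (at x)" if x: "x \<in> ball 0 R - K" for x
      proof -
        have xP: "x \<notin> PP \<tau> b" using x by (auto simp: K_def)
        obtain D where D: "(f has_field_derivative D) (at x)" using fF_deriv[OF \<tau> b xP] unfolding f_def by blast
        have "(g has_field_derivative D) (at x)"
        proof (rule has_field_derivative_transform_within_open[OF D opn x])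
          fix y assume "y \<in> ball 0 R - K"
          then have "y \<notin> PP \<tau> b" by (auto simp: K_def)
          then show "f y = g y" using gf by simp
        qed
        then show ?thesis by blast
      qed
      then show ?thesis using opn by (simp add: holomorphic_on_open)
    qed
    then show ?thesis by (rule no_isolated_singularity[OF contg_on _ open_ball finK])
  qed
  have hol: "g holomorphic_on UNIV"
  proof -
    have "\<exists>D. (g has_field_derivative D) (at x)" for x
    proof -
      have "g holomorphic_on ball 0 (norm x + 1)" by (rule holball)
      then show ?thesis using holomorphic_on_open[of "ball 0 (norm x + 1)" g] by auto
    qed
    then show ?thesis by (simp add: holomorphic_on_open)
  qed
  define K where "K = (\<lambda>p. of_real (fst p) + of_real (snd p) * \<tau>) ` ({0..1::real} \<times> {0..1::real})"
  have cK: "compact K" unfolding K_def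
    by (intro compact_continuous_image compact_Times compact_Icc continuous_intros)
  have bK: "bounded (g ` K)" by (intro compact_imp_bounded compact_continuous_image contg_on cK)
  have "range g \<subseteq> g ` K"
  proof
    fix y assume "y \<in> range g"
    then obtain a where y: "y = g a" by auto
    define t where "t = Im a / Im \<tau>"
    define s where "s = Re a - t * Re \<tau>"
    define m where "m = \<lfloor>s\<rfloor>"
    define n where "n = \<lfloor>t\<rfloor>"
    have "a - latt \<tau> (m, n) = of_real (s - of_int m) + of_real (t - of_int n) * \<tau>"
      using \<tau> by (intro complex_eqI) (simp_all add: latt_def s_def t_def field_simps)
    moreover have "s - of_int m \<in> {0..1}" "t - of_int n \<in> {0..1}"
      unfolding m_def n_def by (auto simp: frac_lt_1 less_imp_le) linarith+
    ultimately have inK: "a - latt \<tau> (m, n) \<in> K" unfolding K_def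
      by (intro image_eqI[where x="(s - of_int m, t - of_int n)"]) auto
    have "g a = g ((a - latt \<tau> (m, n)) + latt \<tau> (m, n))" by simp
    also have "\<dots> = g (a - latt \<tau> (m, n))" by (rule gper)
    finally show "y \<in> g ` K" using y inK by auto
  qed
  then have "bounded (range g)" using bK bounded_subset by blast
  then have "g constant_on UNIV" by (rule Liouville_theorem[OF hol])
  then obtain C where C: "\<And>x. g x = C" by (auto simp: constant_on_def)
  have "g 0 = 0" using T[of 0] lim0[OF \<tau> b] tendsto_unique[OF at_neq_bot] unfolding f_def by blast
  then have "C = 0" using C by simp
  then show ?thesis using gf[OF a] C by (simp add: f_def)
qed



lemma wp'_Qf:
  assumes \<tau>: "Im \<tau> > 0" and w: "w \<notin> LL \<tau>"
  shows "wp' \<tau> w = Qf \<tau> w"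
proof -
  have "((\<lambda>z. wpW \<tau> z + G2 \<tau>) has_field_derivative Qf \<tau> w + 0) (at w)"
    by (intro DERIV_add wpW_deriv(1)[OF \<tau> w] DERIV_const)
  then have "(wp \<tau> has_field_derivative Qf \<tau> w) (at w)" by (simp add: wp_def[abs_def])
  then show ?thesis unfolding wp'_def by (rule DERIV_imp_deriv)
qed

lemma zeta_odd: "zeta \<tau> (- u) = - zeta \<tau> u"
  by (simp add: zeta_def zetaW_odd)

theorem lemma10p2:
  fixes \<tau> x y z :: complex
  assumes "Im \<tau> > 0"
    and "\<forall>p. x - y \<noteq> latt \<tau> p"
    and "\<forall>p. y - z \<noteq> latt \<tau> p"
    and "\<forall>p. z - x \<noteq> latt \<tau> p"
  shows "frakZ \<tau> x y z = frakZ \<tau> y z x"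
proof -
  have \<tau>: "Im \<tau> > 0" by fact
  define a where "a = x - y"
  define b where "b = y - z"
  have aL: "a \<notin> LL \<tau>" using assms(2) by (auto simp: LL_def a_def)
  have bL: "b \<notin> LL \<tau>" using assms(3) by (auto simp: LL_def b_def)
  have cL: "z - x \<notin> LL \<tau>" using assms(4) by (auto simp: LL_def)
  have abL: "a + b \<notin> LL \<tau>"
  proof -
    have "a + b = - (z - x)" by (simp add: a_def b_def)
    then show ?thesis using cL LL_neg by metis
  qed
  have aP: "a \<notin> PP \<tau> b" using aL abL by (simp add: PP_def)
  have F: "fF \<tau> b a = 0" by (rule fF_zero[OF \<tau> bL aP])
  have zc: "zeta \<tau> (z - x) = - zeta \<tau> (a + b)"
  proof -
    have "z - x = - (a + b)" by (simp add: a_def b_def)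
    then show ?thesis by (simp only: zeta_odd)
  qed
  have "frakZ \<tau> x y z - frakZ \<tau> y z x
      = (wp \<tau> a - wp \<tau> b) * (zeta \<tau> a + zeta \<tau> b - zeta \<tau> (a + b)) + (wp' \<tau> a - wp' \<tau> b) / 2"
  proof -
    have e1: "frakZ \<tau> x y z = wp \<tau> a * (zeta \<tau> a + zeta \<tau> b + zeta \<tau> (z - x)) + wp' \<tau> a / 2"
      unfolding frakZ_def a_def b_def by simp
    have e2: "frakZ \<tau> y z x = wp \<tau> b * (zeta \<tau> b + zeta \<tau> (z - x) + zeta \<tau> a) + wp' \<tau> b / 2"
      unfolding frakZ_def a_def b_def by simp
    show ?thesis unfolding e1 e2 zc by (simp add: algebra_simps diff_divide_distrib)
  qed
  also have "\<dots> = (wpW \<tau> a - wpW \<tau> b) * (zetaW \<tau> a + zetaW \<tau> b - zetaW \<tau> (a + b)) + (Qf \<tau> a - Qf \<tau> b) / 2"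
    using wp'_Qf[OF \<tau> aL] wp'_Qf[OF \<tau> bL] by (simp add: wp_def zeta_def algebra_simps)
  also have "\<dots> = - fF \<tau> b a" unfolding fF_def by (simp add: algebra_simps)
  also have "\<dots> = 0" using F by simp
  finally show ?thesis by simp
qed


end
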